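(* Let $\mathcal F,\mathcal F'$ be $\rho$-flags on $V,V'$ with fixed adapted bases $(v_i),(v'_i)$. Define $F:U(M(\rho,k))\times{\rm Aut}_0(\mathcal C)\times\mathcal T\to{\rm Iso}_{alg}({\rm End}(\mathcal F),{\rm End}(\mathcal F'))$ by $F(A,g,(a_{ij}))=\varphi$, where $\varphi$ is the linear map with $\varphi(E_{ij})=F_{ij}$ for all $i\rho j$, with $F_{ij}$ constructed as follows: $(w_1,\dots,w_n)=(v'_1,\dots,v'_n)A^g$, $F_{ij}(w_j)=a_{ij}w_i$ and $F_{ij}(w_r)=0$ for $r\neq j$. Then $F$ is well defined (each such $\varphi$ is an algebra isomorphism ${\rm End}(\mathcal F)\to{\rm End}(\mathcal F')$) and $F$ is surjective: every algebra isomorphism ${\rm End}(\mathcal F)\to{\rm End}(\mathcal F')$ is of the form $F(A,g,(a_{ij})_{i\rho j})$.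
   Context: Let $k$ be a field, $n\ge 1$, $\rho$ a preorder on $\{1,\dots,n\}$, $M(\rho,k)$ the subalgebra of $M_n(k)$ of matrices with $(i,j)$-entry $0$ whenever $(i,j)\notin\rho$, and $U(M(\rho,k))$ its group of invertible elements. Write $i\sim j$ iff $i\rho j$ and $j\rho i$; $\mathcal C$ is the set of classes, $\hat i$ the class of $i$, ordered by $\hat i\le\hat j$ iff $i\rho j$; $m_\alpha=|\alpha|$. A $\rho$-flag $(V,(V_\alpha)_{\alpha\in\mathcal C})$ is an $n$-dimensional space with subspaces $V_\alpha$ admitting a basis $B=\bigcup_\alpha B_\alpha$ (disjoint) with $|B_\alpha|=m_\alpha$ and $\bigcup_{\beta\le\alpha}B_\beta$ a basis of $V_\alpha$; ${\rm End}(\mathcal F)$ is the algebra of linear $f:V\to V$ with $f(V_\alpha)\subseteq V_\alpha$. An adapted basis $(v_i)_{1\le i\le n}$ of $V$ is one with $\{v_i:\hat i\le\alpha\}$ a basis of $V_\alpha$ for all $\alpha$; for $i\rho j$, $E_{ij}(v_t)=\delta_{jt}v_i$. ${\rm Aut}_0(\mathcal C)$ is the group of poset automorphisms $g$ of $\mathcal C$ with $m_{g(\alpha)}=m_\alpha$ for all $\alpha$. For $g\in{\rm Aut}_0(\mathcal C)$, $\tilde g\in S_n$ is defined by: if $\alpha=\{i_1<\dots<i_r\}$ and $g(\alpha)=\{j_1<\dots<j_r\}$ then $\tilde g(i_s)=j_s$. For $A\in M_n(k)$, $A^g$ is the matrix whose $(i,j)$-entry is the $(i,\tilde g(j))$-entry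 of $A$. $\mathcal T$ is the set of families $(a_{ij})_{i\rho j}$ in $k^*$ with $a_{ij}a_{jr}=a_{ir}$ whenever $i\rho j$, $j\rho r$. $(w_1,\dots,w_n)=(v'_1,\dots,v'_n)M$ means $w_j=\sum_i M_{ij}v'_i$. *)

theory Defs
  imports Complex_Main
begin

text \<open>Indices are 1..n. Matrices are functions nat => nat => 'k, only entries in {1..n}^2 matter.\<close>

definition cls :: "(nat \<times> nat) set \<Rightarrow> nat \<Rightarrow> nat set" where
  "cls \<rho> i = {j. (i, j) \<in> \<rho> \<and> (j, i) \<in> \<rho>}"

definition classes :: "(nat \<times> nat) set \<Rightarrow> nat \<Rightarrow> nat set set" where
  "classes \<rho> n = cls \<rho> ` {1..n}"

definition cls_le :: "(nat \<times> nat) set \<Rightarrow> nat set \<Rightarrow> nat set \<Rightarrow> bool" where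
  "cls_le \<rho> \<alpha> \<beta> = (\<exists>i\<in>\<alpha>. \<exists>j\<in>\<beta>. (i, j) \<in> \<rho>)"

definition rho_mat :: "(nat \<times> nat) set \<Rightarrow> (nat \<Rightarrow> nat \<Rightarrow> 'k::field) set" where
  "rho_mat \<rho> = {A. \<forall>i j. (i, j) \<notin> \<rho> \<longrightarrow> A i j = 0}"

definition mat_mult :: "nat \<Rightarrow> (nat \<Rightarrow> nat \<Rightarrow> 'k::field) \<Rightarrow> (nat \<Rightarrow> nat \<Rightarrow> 'k) \<Rightarrow> (nat \<Rightarrow> nat \<Rightarrow> 'k)" where
  "mat_mult n A B = (\<lambda>i j. \<Sum>t = 1..n. A i t * B t j)"

definition mat_one :: "nat \<Rightarrow> (nat \<Rightarrow> nat \<Rightarrow> 'k::field)" where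
  "mat_one n = (\<lambda>i j. if i = j \<and> i \<in> {1..n} then 1 else 0)"

definition units_rho :: "(nat \<times> nat) set \<Rightarrow> nat \<Rightarrow> (nat \<Rightarrow> nat \<Rightarrow> 'k::field) set" where
  "units_rho \<rho> n = {A \<in> rho_mat \<rho>. \<exists>B \<in> rho_mat \<rho>.
       mat_mult n A B = mat_one n \<and> mat_mult n B A = mat_one n}"

text \<open>Aut_0(C): poset automorphisms of the classes preserving class sizes
  (only the values of g on classes matter).\<close>
definition Aut0 :: "(nat \<times> nat) set \<Rightarrow> nat \<Rightarrow> (nat set \<Rightarrow> nat set) set" where
  "Aut0 \<rho> n = {g. bij_betw g (classes \<rho> n) (classes \<rho> n)
      \<and> (\<forall>\<alpha>\<in>classes \<rho> n. \<forall>\<beta>\<in>classes \<rho> n. cls_le \<rho> \<alpha> \<beta> \<longleftrightarrow> cls_le \<rho> (g \<alpha>) (g \<beta>))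
      \<and> (\<forall>\<alpha>\<in>classes \<rho> n. card (g \<alpha>) = card \<alpha>)}"

text \<open>tilde g: the s-th smallest element of a class goes to the s-th smallest element of its image.\<close>
definition tilde :: "(nat \<times> nat) set \<Rightarrow> (nat set \<Rightarrow> nat set) \<Rightarrow> nat \<Rightarrow> nat" where
  "tilde \<rho> g i = (THE j. j \<in> g (cls \<rho> i) \<and>
      card {t \<in> g (cls \<rho> i). t < j} = card {t \<in> cls \<rho> i. t < i})"

definition mat_twist :: "(nat \<times> nat) set \<Rightarrow> (nat set \<Rightarrow> nat set) \<Rightarrow> (nat \<Rightarrow> nat \<Rightarrow> 'k) \<Rightarrow> (nat \<Rightarrow> nat \<Rightarrow> 'k)" where
  "mat_twist \<rho> g A = (\<lambda>i j. A i (tilde \<rho> g j))"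

definition Tfam :: "(nat \<times> nat) set \<Rightarrow> (nat \<Rightarrow> nat \<Rightarrow> 'k::field) set" where
  "Tfam \<rho> = {a. (\<forall>(i, j) \<in> \<rho>. a i j \<noteq> 0) \<and>
      (\<forall>i j r. (i, j) \<in> \<rho> \<longrightarrow> (j, r) \<in> \<rho> \<longrightarrow> a i j * a j r = a i r)}"

definition coord :: "('k::field \<Rightarrow> 'v::ab_group_add \<Rightarrow> 'v) \<Rightarrow> (nat \<Rightarrow> 'v) \<Rightarrow> nat \<Rightarrow> 'v \<Rightarrow> nat \<Rightarrow> 'k" where
  "coord s v n x i = module.representation s (v ` {1..n}) x (v i)"

text \<open>Adapted basis of a rho-flag (V, (V_alpha)): V is the whole type 'v.\<close>
definition adapted_basis :: "('k::field \<Rightarrow> 'v::ab_group_add \<Rightarrow> 'v) \<Rightarrow> (nat \<times> nat) set \<Rightarrow> nat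
    \<Rightarrow> (nat set \<Rightarrow> 'v set) \<Rightarrow> (nat \<Rightarrow> 'v) \<Rightarrow> bool" where
  "adapted_basis s \<rho> n Vf v \<longleftrightarrow> inj_on v {1..n} \<and> \<not> module.dependent s (v ` {1..n})
     \<and> module.span s (v ` {1..n}) = UNIV
     \<and> (\<forall>\<alpha> \<in> classes \<rho> n. module.subspace s (Vf \<alpha>)
          \<and> module.span s {v i | i. i \<in> {1..n} \<and> cls_le \<rho> (cls \<rho> i) \<alpha>} = Vf \<alpha>)"

definition End_flag :: "('k::field \<Rightarrow> 'v::ab_group_add \<Rightarrow> 'v) \<Rightarrow> (nat \<times> nat) set \<Rightarrow> nat
    \<Rightarrow> (nat set \<Rightarrow> 'v set) \<Rightarrow> ('v \<Rightarrow> 'v) set" where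
  "End_flag s \<rho> n Vf = {f. Vector_Spaces.linear s s f \<and> (\<forall>\<alpha> \<in> classes \<rho> n. f ` Vf \<alpha> \<subseteq> Vf \<alpha>)}"

definition alg_iso :: "('k::field \<Rightarrow> 'v::ab_group_add \<Rightarrow> 'v) \<Rightarrow> ('k \<Rightarrow> 'w::ab_group_add \<Rightarrow> 'w)
    \<Rightarrow> ('v \<Rightarrow> 'v) set \<Rightarrow> ('w \<Rightarrow> 'w) set \<Rightarrow> (('v \<Rightarrow> 'v) \<Rightarrow> ('w \<Rightarrow> 'w)) \<Rightarrow> bool" where
  "alg_iso s s' E E' \<phi> \<longleftrightarrow> bij_betw \<phi> E E'
     \<and> (\<forall>f \<in> E. \<forall>g \<in> E. \<phi> (\<lambda>x. f x + g x) = (\<lambda>x. \<phi> f x + \<phi> g x))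
     \<and> (\<forall>c. \<forall>f \<in> E. \<phi> (\<lambda>x. s c (f x)) = (\<lambda>x. s' c (\<phi> f x)))
     \<and> (\<forall>f \<in> E. \<forall>g \<in> E. \<phi> (f \<circ> g) = \<phi> f \<circ> \<phi> g)
     \<and> \<phi> id = id"

definition Emat :: "('k::field \<Rightarrow> 'v::ab_group_add \<Rightarrow> 'v) \<Rightarrow> (nat \<Rightarrow> 'v) \<Rightarrow> nat \<Rightarrow> nat \<Rightarrow> nat \<Rightarrow> 'v \<Rightarrow> 'v" where
  "Emat s v n i j = (\<lambda>x. s (coord s v n x j) (v i))"

definition wvec :: "('k::field \<Rightarrow> 'w::ab_group_add \<Rightarrow> 'w) \<Rightarrow> (nat \<Rightarrow> 'w) \<Rightarrow> nat \<Rightarrow> (nat \<Rightarrow> nat \<Rightarrow> 'k) \<Rightarrow> nat \<Rightarrow> 'w" where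
  "wvec s' v' n B j = (\<Sum>i = 1..n. s' (B i j) (v' i))"

definition Fmat :: "('k::field \<Rightarrow> 'w::ab_group_add \<Rightarrow> 'w) \<Rightarrow> (nat \<Rightarrow> 'w) \<Rightarrow> nat \<Rightarrow> (nat \<times> nat) set
    \<Rightarrow> (nat \<Rightarrow> nat \<Rightarrow> 'k) \<Rightarrow> (nat set \<Rightarrow> nat set) \<Rightarrow> (nat \<Rightarrow> nat \<Rightarrow> 'k) \<Rightarrow> nat \<Rightarrow> nat \<Rightarrow> 'w \<Rightarrow> 'w" where
  "Fmat s' v' n \<rho> A g a i j =
     (let w = wvec s' v' n (mat_twist \<rho> g A) in (\<lambda>x. s' (a i j * coord s' w n x j) (w i)))"

end

theory Submission
  imports Defs
begin


definition Mt :: "('k::field \<Rightarrow> 'v::ab_group_add \<Rightarrow> 'v) \<Rightarrow> (nat \<Rightarrow> 'v) \<Rightarrow> nat \<Rightarrow> ('v \<Rightarrow> 'v) \<Rightarrow> nat \<Rightarrow> nat \<Rightarrow> 'k"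
  where "Mt s b n f i j = coord s b n (f (b j)) i"

definition Op :: "('k::field \<Rightarrow> 'v::ab_group_add \<Rightarrow> 'v) \<Rightarrow> (nat \<Rightarrow> 'v) \<Rightarrow> nat \<Rightarrow> (nat \<Rightarrow> nat \<Rightarrow> 'k) \<Rightarrow> 'v \<Rightarrow> 'v"
  where "Op s b n X = (\<lambda>x. \<Sum>i=1..n. \<Sum>j=1..n. s (X i j * coord s b n x j) (b i))"

definition EP :: "('k::field \<Rightarrow> 'v::ab_group_add \<Rightarrow> 'v) \<Rightarrow> (nat \<times> nat) set \<Rightarrow> (nat \<Rightarrow> 'v) \<Rightarrow> nat \<Rightarrow> ('v \<Rightarrow> 'v) set"
  where "EP s \<rho> b n = {f. Vector_Spaces.linear s s f \<and> (\<forall>i\<in>{1..n}. \<forall>j\<in>{1..n}. (i, j) \<notin> \<rho> \<longrightarrow> Mt s b n f i j = 0)}"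

locale nb = vector_space s for s :: "'k::field \<Rightarrow> 'v::ab_group_add \<Rightarrow> 'v" (infixr "*s" 75) +
  fixes b :: "nat \<Rightarrow> 'v" and n :: nat
  assumes b_inj: "inj_on b {1..n}"
    and b_indep: "independent (b ` {1..n})"
    and b_span: "span (b ` {1..n}) = UNIV"
begin

abbreviation C where "C x i \<equiv> coord s b n x i"

lemma C_eq: "C x i = representation (b ` {1..n}) x (b i)"
  by (simp add: coord_def)

lemma C_add: "C (x + y) i = C x i + C y i"
  using representation_add[OF b_indep] b_span by (simp add: C_eq)

lemma C_scale: "C (c *s x) i = c * C x i"
  using representation_scale[OF b_indep] b_span by (simp add: C_eq)

lemma C_sum: "C (sum f I) i = (\<Sum>j\<in>I. C (f j) i)"
proof -
  have "\<And>j. f j \<in> span (b ` {1..n})" using b_span by simp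
  from representation_sum[OF b_indep, where v=f and I=I, OF this] show ?thesis by (simp add: C_eq)
qed

lemma C_zero: "C 0 i = 0"
  by (simp add: C_eq representation_zero)

lemma C_basis: assumes i: "i \<in> {1..n}" and j: "j \<in> {1..n}" shows "C (b j) i = (if i = j then 1 else 0)"
proof -
  have "representation (b ` {1..n}) (b j) = (\<lambda>v. if v = b j then 1 else 0)"
    by (rule representation_basis[OF b_indep imageI[OF j]])
  moreover have "(b i = b j) = (i = j)" by (rule inj_on_eq_iff[OF b_inj i j])
  ultimately show ?thesis by (simp add: C_eq)
qed

lemma expand: "x = (\<Sum>t=1..n. C x t *s b t)"
proof -
  have "x = (\<Sum>y\<in>b ` {1..n}. representation (b ` {1..n}) x y *s y)"
    using sum_representation_eq[OF b_indep, of x "b ` {1..n}"] b_span by simp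
  also have "\<dots> = (\<Sum>t=1..n. C x t *s b t)"
    by (rule sum.reindex_cong[OF b_inj]) (auto simp: C_eq)
  finally show ?thesis .
qed

lemma C_lincomb: assumes i: "i \<in> {1..n}" shows "C (\<Sum>t=1..n. c t *s b t) i = c i"
proof -
  have "C (\<Sum>t=1..n. c t *s b t) i = (\<Sum>t=1..n. c t * C (b t) i)" by (simp add: C_sum C_scale)
  also have "\<dots> = (\<Sum>t=1..n. if t = i then c i else 0)"
  proof (rule sum.cong)
    fix t assume t: "t \<in> {1..n}"
    show "c t * C (b t) i = (if t = i then c i else 0)" using C_basis[OF i t] by auto
  qed simp
  also have "\<dots> = c i" using i by simp
  finally show ?thesis .
qed

lemma eqI: assumes "\<And>i. i \<in> {1..n} \<Longrightarrow> C x i = C y i" shows "x = y"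
proof -
  have "x = (\<Sum>t=1..n. C x t *s b t)" by (rule expand)
  also have "\<dots> = (\<Sum>t=1..n. C y t *s b t)" by (rule sum.cong) (simp_all add: assms)
  also have "\<dots> = y" by (rule expand[symmetric])
  finally show ?thesis .
qed

lemma b_nz: assumes i: "i \<in> {1..n}" shows "b i \<noteq> 0"
proof
  assume "b i = 0"
  hence "0 \<in> b ` {1..n}" using imageI[OF i, of b] by simp
  thus False using b_indep dependent_zero by metis
qed

lemma in_span_iff:
  assumes "T \<subseteq> {1..n}"
  shows "x \<in> span (b ` T) \<longleftrightarrow> (\<forall>i\<in>{1..n}. i \<notin> T \<longrightarrow> C x i = 0)"
proof
  assume x: "x \<in> span (b ` T)"
  have eq: "representation (b ` {1..n}) x = representation (b ` T) x"
    by (rule representation_extend[OF b_indep x]) (rule image_mono[OF assms])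
  show "\<forall>i\<in>{1..n}. i \<notin> T \<longrightarrow> C x i = 0"
  proof (intro ballI impI)
    fix i assume i: "i \<in> {1..n}" and iT: "i \<notin> T"
    have "b i \<notin> b ` T"
    proof
      assume "b i \<in> b ` T"
      then obtain t where t: "t \<in> T" "b i = b t" by blast
      have "t \<in> {1..n}" using t(1) assms by blast
      hence "i = t" using inj_on_eq_iff[OF b_inj i] t(2) by blast
      thus False using t(1) iT by simp
    qed
    hence "representation (b ` T) x (b i) = 0" by (meson representation_ne_zero)
    thus "C x i = 0" using eq by (simp add: C_eq)
  qed
next
  assume h: "\<forall>i\<in>{1..n}. i \<notin> T \<longrightarrow> C x i = 0"
  have "x = (\<Sum>t=1..n. C x t *s b t)" by (rule expand)
  also have "\<dots> \<in> span (b ` T)"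
  proof (rule span_sum)
    fix t assume t: "t \<in> {1..n}"
    show "C x t *s b t \<in> span (b ` T)"
    proof (cases "t \<in> T")
      case True thus ?thesis by (intro span_scale span_base imageI)
    next
      case False hence "C x t = 0" using h t by blast
      thus ?thesis by (simp add: span_zero)
    qed
  qed
  finally show "x \<in> span (b ` T)" .
qed

abbreviation lin where "lin f \<equiv> Vector_Spaces.linear s s f"
abbreviation M where "M f i j \<equiv> Mt s b n f i j"

lemma lin_iff': "lin f \<longleftrightarrow> (\<forall>x y. f (x + y) = f x + f y) \<and> (\<forall>c x. f (c *s x) = c *s f x)"
  unfolding Vector_Spaces.linear_iff using vector_space_axioms by simp

lemma lin_zero_val: "lin f \<Longrightarrow> f 0 = 0"
  by (metis lin_iff' scale_zero_left)

lemma lin_sum: assumes "lin f" shows "f (sum g A) = (\<Sum>a\<in>A. f (g a))"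
proof (induction A rule: infinite_finite_induct)
  case (infinite A) then show ?case using lin_zero_val[OF assms] by simp
next
  case empty then show ?case using lin_zero_val[OF assms] by simp
next
  case (insert x F) then show ?case using assms by (simp add: lin_iff')
qed

lemma lin_scaleD: "lin f \<Longrightarrow> f (c *s x) = c *s f x" by (simp add: lin_iff')
lemma lin_addD: "lin f \<Longrightarrow> f (x + y) = f x + f y" by (simp add: lin_iff')

lemma lin_add: "lin f \<Longrightarrow> lin h \<Longrightarrow> lin (\<lambda>x. f x + h x)"
  by (simp add: lin_iff' scale_right_distrib algebra_simps)
lemma lin_scale: "lin f \<Longrightarrow> lin (\<lambda>x. c *s f x)"
  by (simp add: lin_iff' scale_right_distrib mult.commute)
lemma lin_comp: "lin f \<Longrightarrow> lin h \<Longrightarrow> lin (f \<circ> h)"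
  by (simp add: lin_iff')
lemma lin_id: "lin id" by (simp add: lin_iff')
lemma lin_zero: "lin (\<lambda>x. 0)" by (simp add: lin_iff')
lemma lin_rank1: "lin (\<lambda>x. (c * C x j) *s y)"
  by (simp add: lin_iff' C_add C_scale algebra_simps scale_left_distrib)

lemma C_apply: assumes "lin f" shows "C (f x) i = (\<Sum>t=1..n. C x t * M f i t)"
proof -
  have "f x = f (\<Sum>t=1..n. C x t *s b t)" by (subst expand[of x]) (rule refl)
  also have "\<dots> = (\<Sum>t=1..n. C x t *s f (b t))" by (simp add: lin_sum[OF assms] lin_scaleD[OF assms])
  finally show ?thesis by (simp add: C_sum C_scale Mt_def)
qed

lemma Op_basis: assumes j: "j \<in> {1..n}" shows "Op s b n X (b j) = (\<Sum>i=1..n. X i j *s b i)"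
  unfolding Op_def
proof (rule sum.cong)
  fix i assume i: "i \<in> {1..n}"
  have "(\<Sum>t=1..n. (X i t * C (b j) t) *s b i) = (\<Sum>t=1..n. if t = j then X i j *s b i else 0)"
  proof (rule sum.cong)
    fix t assume t: "t \<in> {1..n}"
    show "(X i t * C (b j) t) *s b i = (if t = j then X i j *s b i else 0)" using C_basis[OF t j] by auto
  qed simp
  also have "\<dots> = X i j *s b i" using j by simp
  finally show "(\<Sum>t=1..n. (X i t * C (b j) t) *s b i) = X i j *s b i" .
qed simp

lemma Mt_Op: assumes i: "i \<in> {1..n}" and j: "j \<in> {1..n}" shows "M (Op s b n X) i j = X i j"
  unfolding Mt_def Op_basis[OF j] by (rule C_lincomb[OF i])

lemma lin_Op: "lin (Op s b n X)"
proof -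
  have 1: "Op s b n X (x + y) = Op s b n X x + Op s b n X y" for x y
    by (simp add: Op_def C_add algebra_simps scale_left_distrib sum.distrib)
  have 2: "Op s b n X (c *s x) = c *s Op s b n X x" for c x
    by (simp add: Op_def C_scale scale_sum_right mult.left_commute)
  show ?thesis using 1 2 by (simp add: lin_iff')
qed

lemma Mt_eqI: assumes "lin f" "lin h" "\<And>i j. i \<in> {1..n} \<Longrightarrow> j \<in> {1..n} \<Longrightarrow> M f i j = M h i j"
  shows "f = h"
proof
  fix x show "f x = h x"
  proof (rule eqI)
    fix i assume i: "i \<in> {1..n}"
    show "C (f x) i = C (h x) i"
      unfolding C_apply[OF assms(1)] C_apply[OF assms(2)]
      by (rule sum.cong) (simp_all add: assms(3)[OF i])
  qed
qed

lemma Op_Mt: "lin f \<Longrightarrow> Op s b n (M f) = f"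
  by (rule Mt_eqI) (simp_all add: lin_Op Mt_Op)

lemma Mt_add: "M (\<lambda>x. f x + h x) i j = M f i j + M h i j"
  by (simp add: Mt_def C_add)
lemma Mt_scale: "M (\<lambda>x. c *s f x) i j = c * M f i j"
  by (simp add: Mt_def C_scale)
lemma Mt_comp: "lin f \<Longrightarrow> M (f \<circ> h) i r = (\<Sum>t=1..n. M f i t * M h t r)"
  by (simp add: Mt_def[of _ _ _ "f \<circ> h"] C_apply Mt_def[of _ _ _ h] mult.commute)
lemma Mt_id: "i \<in> {1..n} \<Longrightarrow> j \<in> {1..n} \<Longrightarrow> M id i j = (if i = j then 1 else 0)"
  by (simp add: Mt_def C_basis)
lemma Mt_zero: "M (\<lambda>x. 0) i j = 0"
  by (simp add: Mt_def C_zero)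
lemma Emat_eq: "Emat s b n i j = (\<lambda>x. C x j *s b i)"
  by (simp add: Emat_def)
lemma lin_Emat: "lin (Emat s b n i j)"
  using lin_rank1[of 1 j "b i"] by (simp add: Emat_eq)
lemma Mt_Emat: "i \<in> {1..n} \<Longrightarrow> j \<in> {1..n} \<Longrightarrow> r \<in> {1..n} \<Longrightarrow> t \<in> {1..n} \<Longrightarrow>
   M (Emat s b n i j) r t = (if r = i \<and> t = j then 1 else 0)"
  by (simp add: Mt_def Emat_eq C_scale C_basis)

end



context
  fixes \<rho> :: "(nat \<times> nat) set" and n :: nat
  assumes P: "preorder_on {1..n} \<rho>"
begin

lemma po_sub: "(i, j) \<in> \<rho> \<Longrightarrow> i \<in> {1..n} \<and> j \<in> {1..n}"
  using P unfolding preorder_on_def by blast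

lemma po_refl: "i \<in> {1..n} \<Longrightarrow> (i, i) \<in> \<rho>"
  using P unfolding preorder_on_def refl_on_def by blast

lemma po_trans: "(i, j) \<in> \<rho> \<Longrightarrow> (j, k) \<in> \<rho> \<Longrightarrow> (i, k) \<in> \<rho>"
  using P unfolding preorder_on_def trans_def by blast

lemma cls_sub: "cls \<rho> i \<subseteq> {1..n}"
  unfolding cls_def using po_sub by blast

lemma cls_self: "i \<in> {1..n} \<Longrightarrow> i \<in> cls \<rho> i"
  unfolding cls_def using po_refl by blast

lemma cls_le_iff: assumes "i \<in> {1..n}" "j \<in> {1..n}"
  shows "cls_le \<rho> (cls \<rho> i) (cls \<rho> j) \<longleftrightarrow> (i, j) \<in> \<rho>"
proof
  assume "cls_le \<rho> (cls \<rho> i) (cls \<rho> j)"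
  then obtain i' j' where "i' \<in> cls \<rho> i" "j' \<in> cls \<rho> j" "(i', j') \<in> \<rho>"
    unfolding cls_le_def by blast
  thus "(i, j) \<in> \<rho>" unfolding cls_def using po_trans by blast
next
  assume "(i, j) \<in> \<rho>"
  thus "cls_le \<rho> (cls \<rho> i) (cls \<rho> j)" unfolding cls_le_def using cls_self assms by blast
qed

lemma cls_mem: "j \<in> cls \<rho> i \<Longrightarrow> cls \<rho> j = cls \<rho> i"
  unfolding cls_def using po_trans by blast

lemma cls_eq_iff: assumes "i \<in> {1..n}" "j \<in> {1..n}"
  shows "cls \<rho> i = cls \<rho> j \<longleftrightarrow> (i, j) \<in> \<rho> \<and> (j, i) \<in> \<rho>"
proof
  assume "cls \<rho> i = cls \<rho> j"
  hence "j \<in> cls \<rho> i" using cls_self[OF assms(2)] by simp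
  thus "(i, j) \<in> \<rho> \<and> (j, i) \<in> \<rho>" unfolding cls_def by blast
next
  assume "(i, j) \<in> \<rho> \<and> (j, i) \<in> \<rho>"
  hence "j \<in> cls \<rho> i" unfolding cls_def by blast
  thus "cls \<rho> i = cls \<rho> j" using cls_mem by metis
qed

lemma classes_E: "\<alpha> \<in> classes \<rho> n \<Longrightarrow> \<exists>i\<in>{1..n}. \<alpha> = cls \<rho> i"
  unfolding classes_def by blast

lemma cls_in_classes: "i \<in> {1..n} \<Longrightarrow> cls \<rho> i \<in> classes \<rho> n"
  unfolding classes_def by blast

end

context nb
begin

lemma EP_lin: "f \<in> EP s \<rho> b n \<Longrightarrow> lin f" by (simp add: EP_def)

lemma EP_pat: "f \<in> EP s \<rho> b n \<Longrightarrow> i \<in> {1..n} \<Longrightarrow> j \<in> {1..n} \<Longrightarrow> (i, j) \<notin> \<rho> \<Longrightarrow> M f i j = 0"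
  by (simp add: EP_def)

lemma EP_zero: "(\<lambda>x. 0) \<in> EP s \<rho> b n"
  by (simp add: EP_def lin_zero Mt_zero)

lemma EP_id: "preorder_on {1..n} \<rho> \<Longrightarrow> id \<in> EP s \<rho> b n"
  unfolding EP_def using lin_id Mt_id po_refl by fastforce

lemma EP_add: "f \<in> EP s \<rho> b n \<Longrightarrow> h \<in> EP s \<rho> b n \<Longrightarrow> (\<lambda>x. f x + h x) \<in> EP s \<rho> b n"
  by (simp add: EP_def lin_add Mt_add)

lemma EP_scale: "f \<in> EP s \<rho> b n \<Longrightarrow> (\<lambda>x. c *s f x) \<in> EP s \<rho> b n"
  by (simp add: EP_def lin_scale Mt_scale)

lemma EP_comp: assumes P: "preorder_on {1..n} \<rho>" and f: "f \<in> EP s \<rho> b n" and h: "h \<in> EP s \<rho> b n"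
  shows "f \<circ> h \<in> EP s \<rho> b n"
  unfolding EP_def
proof (intro CollectI conjI ballI impI)
  show "lin (f \<circ> h)" using lin_comp EP_lin f h by blast
  fix i r assume i: "i \<in> {1..n}" and r: "r \<in> {1..n}" and ir: "(i, r) \<notin> \<rho>"
  have "M (f \<circ> h) i r = (\<Sum>t=1..n. M f i t * M h t r)" by (rule Mt_comp[OF EP_lin[OF f]])
  also have "\<dots> = (\<Sum>t=1..n. 0)"
  proof (rule sum.cong)
    fix t assume t: "t \<in> {1..n}"
    show "M f i t * M h t r = 0"
    proof (cases "(i, t) \<in> \<rho>")
      case True
      hence "(t, r) \<notin> \<rho>" using ir po_trans[OF P] by blast
      thus ?thesis using EP_pat[OF h t r] by simp
    next
      case False thus ?thesis using EP_pat[OF f i t] by simp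
    qed
  qed simp
  finally show "M (f \<circ> h) i r = 0" by simp
qed

lemma EP_Emat: assumes "(i, j) \<in> \<rho>" "preorder_on {1..n} \<rho>"
  shows "Emat s b n i j \<in> EP s \<rho> b n"
  unfolding EP_def
proof (intro CollectI conjI ballI impI)
  show "lin (Emat s b n i j)" by (rule lin_Emat)
  have ij: "i \<in> {1..n}" "j \<in> {1..n}" using po_sub[OF assms(2) assms(1)] by auto
  fix r t assume r: "r \<in> {1..n}" and t: "t \<in> {1..n}" and rt: "(r, t) \<notin> \<rho>"
  hence "\<not> (r = i \<and> t = j)" using assms(1) by blast
  thus "M (Emat s b n i j) r t = 0" using Mt_Emat[OF ij r t] by simp
qed

lemma Emat_comp: assumes "i \<in> {1..n}" "j \<in> {1..n}" "k \<in> {1..n}" "r \<in> {1..n}"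
  shows "Emat s b n i j \<circ> Emat s b n k r = (if j = k then Emat s b n i r else (\<lambda>x. 0))"
  using assms by (auto simp: Emat_eq C_scale C_basis fun_eq_iff)

lemma lincomb_swap: "(\<Sum>j\<in>J. c j *s (\<Sum>i\<in>I. P i j *s w i)) = (\<Sum>i\<in>I. (\<Sum>j\<in>J. c j * P i j) *s w i)"
proof -
  have "(\<Sum>j\<in>J. c j *s (\<Sum>i\<in>I. P i j *s w i)) = (\<Sum>j\<in>J. \<Sum>i\<in>I. (c j * P i j) *s w i)"
    by (simp add: scale_sum_right)
  also have "\<dots> = (\<Sum>i\<in>I. \<Sum>j\<in>J. (c j * P i j) *s w i)" by (rule sum.swap)
  also have "\<dots> = (\<Sum>i\<in>I. (\<Sum>j\<in>J. c j * P i j) *s w i)" by (simp add: scale_sum_left)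
  finally show ?thesis .
qed

end

section \<open>Flag endomorphisms\<close>

lemma flag_EP:
  assumes nbv: "nb s v n" and P: "preorder_on {1..n} \<rho>" and ad: "adapted_basis s \<rho> n Vf v"
  shows "End_flag s \<rho> n Vf = EP s \<rho> v n"
proof -
  interpret V: nb s v n by (rule nbv)
  define D where "D j = {t \<in> {1..n}. (t, j) \<in> \<rho>}" for j
  have Dsub: "D j \<subseteq> {1..n}" for j unfolding D_def by blast
  have Vf: "Vf (cls \<rho> j) = V.span (v ` D j)" if j: "j \<in> {1..n}" for j
  proof -
    have "{v i | i. i \<in> {1..n} \<and> cls_le \<rho> (cls \<rho> i) (cls \<rho> j)} = v ` D j"
      unfolding D_def using cls_le_iff[OF P _ j] by blast
    moreover have "V.span {v i | i. i \<in> {1..n} \<and> cls_le \<rho> (cls \<rho> i) (cls \<rho> j)} = Vf (cls \<rho> j)"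
      using ad cls_in_classes[OF P j] unfolding adapted_basis_def by blast
    ultimately show ?thesis by simp
  qed
  show ?thesis
  proof (intro set_eqI iffI)
    fix f assume f: "f \<in> End_flag s \<rho> n Vf"
    hence lf: "V.lin f" unfolding End_flag_def by blast
    show "f \<in> EP s \<rho> v n" unfolding EP_def
    proof (intro CollectI conjI ballI impI lf)
      fix i j assume i: "i \<in> {1..n}" and j: "j \<in> {1..n}" and ij: "(i, j) \<notin> \<rho>"
      have "v j \<in> V.span (v ` D j)" using j po_refl[OF P j] unfolding D_def
        by (intro V.span_base imageI) blast
      hence "f (v j) \<in> f ` Vf (cls \<rho> j)" using Vf[OF j] by blast
      also have "\<dots> \<subseteq> Vf (cls \<rho> j)" using f cls_in_classes[OF P j] unfolding End_flag_def by blast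
      finally have "f (v j) \<in> V.span (v ` D j)" using Vf[OF j] by simp
      hence "\<forall>i\<in>{1..n}. i \<notin> D j \<longrightarrow> V.C (f (v j)) i = 0" using V.in_span_iff[OF Dsub] by blast
      moreover have "i \<notin> D j" using ij unfolding D_def by blast
      ultimately show "Mt s v n f i j = 0" using i by (simp add: Mt_def)
    qed
  next
    fix f assume f: "f \<in> EP s \<rho> v n"
    have lf: "V.lin f" using f by (rule V.EP_lin)
    show "f \<in> End_flag s \<rho> n Vf" unfolding End_flag_def
    proof (intro CollectI conjI ballI lf)
      fix \<alpha> assume "\<alpha> \<in> classes \<rho> n"
      then obtain j where j: "j \<in> {1..n}" and \<alpha>: "\<alpha> = cls \<rho> j" using classes_E[OF P] by blast
      show "f ` Vf \<alpha> \<subseteq> Vf \<alpha>"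
      proof
        fix y assume "y \<in> f ` Vf \<alpha>"
        then obtain x where x: "x \<in> V.span (v ` D j)" and y: "y = f x" using Vf[OF j] \<alpha> by blast
        have xz: "\<forall>i\<in>{1..n}. i \<notin> D j \<longrightarrow> V.C x i = 0" using x V.in_span_iff[OF Dsub] by blast
        have "\<forall>i\<in>{1..n}. i \<notin> D j \<longrightarrow> V.C (f x) i = 0"
        proof (intro ballI impI)
          fix i assume i: "i \<in> {1..n}" and iD: "i \<notin> D j"
          have "V.C (f x) i = (\<Sum>t=1..n. V.C x t * Mt s v n f i t)" by (rule V.C_apply[OF lf])
          also have "\<dots> = (\<Sum>t=1..n. 0)"
          proof (rule sum.cong)
            fix t assume t: "t \<in> {1..n}"
            show "V.C x t * Mt s v n f i t = 0"
            proof (cases "t \<in> D j")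
              case True
              hence "(t, j) \<in> \<rho>" unfolding D_def by blast
              hence "(i, t) \<notin> \<rho>" using iD i po_trans[OF P] unfolding D_def by blast
              thus ?thesis using V.EP_pat[OF f i t] by simp
            next
              case False thus ?thesis using xz t by simp
            qed
          qed simp
          finally show "V.C (f x) i = 0" by simp
        qed
        hence "f x \<in> V.span (v ` D j)" using V.in_span_iff[OF Dsub] by blast
        thus "y \<in> Vf \<alpha>" using y Vf[OF j] \<alpha> by simp
      qed
    qed
  qed
qed

lemma (in vector_space) lincomb_indep:
  fixes n :: nat and w :: "nat \<Rightarrow> 'b"
  assumes h: "\<And>c. (\<Sum>j=1..n. c j *s w j) = 0 \<Longrightarrow> \<forall>j\<in>{1..n}. c j = 0"
  shows "inj_on w {1..n} \<and> independent (w ` {1..n})"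
proof
  show inj: "inj_on w {1..n}"
  proof (rule inj_onI, rule ccontr)
    fix i j assume i: "i \<in> {1..n}" and j: "j \<in> {1..n}" and eq: "w i = w j" and ne: "i \<noteq> j"
    define c where "c t = (if t = i then 1 else if t = j then -1 else (0::'a))" for t
    have "(\<Sum>t=1..n. c t *s w t) = (\<Sum>t=1..n. (if t = i then w t else 0) - (if t = j then w t else 0))"
      by (rule sum.cong) (auto simp: c_def ne)
    also have "\<dots> = w i - w j"
    proof -
      have d1: "(\<Sum>t=1..n. if t = i then w t else 0) = w i" using i by simp
      have d2: "(\<Sum>t=1..n. if t = j then w t else 0) = w j" using j by simp
      show ?thesis unfolding sum_subtractf d1 d2 by (rule refl)
    qed
    also have "\<dots> = 0" using eq by simp
    finally have "\<forall>t\<in>{1..n}. c t = 0" by (rule h)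
    hence "c i = 0" using i by blast
    thus False by (simp add: c_def)
  qed
  show "independent (w ` {1..n})"
  proof
    assume "dependent (w ` {1..n})"
    then obtain u where u: "\<exists>x\<in>w ` {1..n}. u x \<noteq> 0" "(\<Sum>x\<in>w ` {1..n}. u x *s x) = 0"
      using dependent_finite[of "w ` {1..n}"] by blast
    have "(\<Sum>x\<in>w ` {1..n}. u x *s x) = (\<Sum>t=1..n. u (w t) *s w t)"
      by (rule sum.reindex_cong[OF inj refl]) simp
    hence "(\<Sum>t=1..n. u (w t) *s w t) = 0" using u(2) by simp
    hence "\<forall>t\<in>{1..n}. u (w t) = 0" by (rule h)
    thus False using u(1) by blast
  qed
qed

lemma newbasis:
  fixes s :: "'k::field \<Rightarrow> 'v::ab_group_add \<Rightarrow> 'v"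
  assumes nbb: "nb s b n"
    and PQ: "\<And>i r. i \<in> {1..n} \<Longrightarrow> r \<in> {1..n} \<Longrightarrow> (\<Sum>t=1..n. P i t * Q t r) = (if i = r then 1 else 0)"
    and QP: "\<And>i r. i \<in> {1..n} \<Longrightarrow> r \<in> {1..n} \<Longrightarrow> (\<Sum>t=1..n. Q i t * P t r) = (if i = r then 1 else 0)"
    and w: "w = (\<lambda>j. \<Sum>i=1..n. s (P i j) (b i))"
  shows "nb s w n" "\<And>i j. i \<in> {1..n} \<Longrightarrow> j \<in> {1..n} \<Longrightarrow> coord s b n (w j) i = P i j"
    "\<And>r j. r \<in> {1..n} \<Longrightarrow> j \<in> {1..n} \<Longrightarrow> coord s w n (b r) j = Q j r"
proof -
  interpret B: nb s b n by (rule nbb)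
  show co: "\<And>i j. i \<in> {1..n} \<Longrightarrow> j \<in> {1..n} \<Longrightarrow> coord s b n (w j) i = P i j"
    unfolding w by (rule B.C_lincomb)
  have lc: "\<forall>j\<in>{1..n}. c j = 0" if z: "(\<Sum>j=1..n. s (c j) (w j)) = 0" for c
  proof
    have e: "(\<Sum>j=1..n. s (c j) (w j)) = (\<Sum>i=1..n. s (\<Sum>j=1..n. c j * P i j) (b i))"
      unfolding w by (rule B.lincomb_swap)
    have z2: "(\<Sum>j=1..n. c j * P i j) = 0" if i: "i \<in> {1..n}" for i
      using B.C_lincomb[OF i, of "\<lambda>i. \<Sum>j=1..n. c j * P i j"] z e B.C_zero by simp
    fix k assume k: "k \<in> {1..n}"
    have "c k = (\<Sum>j=1..n. if j = k then c j else 0)" using k by simp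
    also have "\<dots> = (\<Sum>j=1..n. (\<Sum>i=1..n. Q k i * P i j) * c j)"
    proof (rule sum.cong)
      fix j assume j: "j \<in> {1..n}"
      show "(if j = k then c j else 0) = (\<Sum>i=1..n. Q k i * P i j) * c j" using QP[OF k j] by auto
    qed simp
    also have "\<dots> = (\<Sum>i=1..n. Q k i * (\<Sum>j=1..n. c j * P i j))"
    proof -
      have "(\<Sum>j=1..n. (\<Sum>i=1..n. Q k i * P i j) * c j) = (\<Sum>j=1..n. \<Sum>i=1..n. Q k i * P i j * c j)"
        by (simp add: sum_distrib_right)
      also have "\<dots> = (\<Sum>i=1..n. \<Sum>j=1..n. Q k i * P i j * c j)" by (rule sum.swap)
      also have "\<dots> = (\<Sum>i=1..n. Q k i * (\<Sum>j=1..n. c j * P i j))" by (simp add: sum_distrib_left mult_ac)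
      finally show ?thesis .
    qed
    also have "\<dots> = 0"
    proof (rule sum.neutral, rule ballI)
      fix i assume i: "i \<in> {1..n}"
      show "Q k i * (\<Sum>j=1..n. c j * P i j) = 0" using z2[OF i] by simp
    qed
    finally show "c k = 0" .
  qed
  have ii: "inj_on w {1..n} \<and> B.independent (w ` {1..n})"
    by (rule B.lincomb_indep) (rule lc)
  have br: "b r = (\<Sum>j=1..n. s (Q j r) (w j))" if r: "r \<in> {1..n}" for r
  proof -
    have "(\<Sum>j=1..n. s (Q j r) (w j)) = (\<Sum>i=1..n. s (\<Sum>j=1..n. Q j r * P i j) (b i))"
      unfolding w by (rule B.lincomb_swap)
    also have "\<dots> = (\<Sum>i=1..n. s (if i = r then 1 else 0) (b i))"
    proof (rule sum.cong)
      fix i assume i: "i \<in> {1..n}"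
      show "s (\<Sum>j=1..n. Q j r * P i j) (b i) = s (if i = r then 1 else 0) (b i)"
        using PQ[OF i r] by (simp add: mult.commute)
    qed simp
    also have "\<dots> = (\<Sum>i=1..n. if i = r then b i else 0)"
      by (rule sum.cong) simp_all
    also have "\<dots> = b r" using r by simp
    finally show ?thesis by simp
  qed
  have sp: "B.span (w ` {1..n}) = UNIV"
  proof -
    have "b ` {1..n} \<subseteq> B.span (w ` {1..n})"
    proof
      fix x assume "x \<in> b ` {1..n}"
      then obtain r where r: "r \<in> {1..n}" "x = b r" by blast
      show "x \<in> B.span (w ` {1..n})" unfolding r(2) br[OF r(1)]
        by (intro B.span_sum B.span_scale B.span_base imageI)
    qed
    hence "B.span (b ` {1..n}) \<subseteq> B.span (w ` {1..n})" using B.span_mono B.span_span by metis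
    thus ?thesis using B.b_span by blast
  qed
  show nbw: "nb s w n" by (unfold_locales) (use ii sp in auto)
  interpret W: nb s w n by (rule nbw)
  show "\<And>r j. r \<in> {1..n} \<Longrightarrow> j \<in> {1..n} \<Longrightarrow> coord s w n (b r) j = Q j r"
    using br W.C_lincomb by simp
qed




lemma C_change:
  assumes nb1: "nb s b1 n" and nb2: "nb s b2 n"
  shows "coord s b2 n x i = (\<Sum>a=1..n. coord s b1 n x a * coord s b2 n (b1 a) i)"
proof -
  interpret B1: nb s b1 n by (rule nb1)
  interpret B2: nb s b2 n by (rule nb2)
  have "coord s b2 n x i = coord s b2 n (\<Sum>a=1..n. s (coord s b1 n x a) (b1 a)) i"
    by (subst B1.expand[of x]) (rule refl)
  also have "\<dots> = (\<Sum>a=1..n. coord s b1 n x a * coord s b2 n (b1 a) i)"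
    by (simp add: B2.C_sum B2.C_scale)
  finally show ?thesis .
qed

lemma transfer1:
  assumes nb1: "nb s b1 n" and nb2: "nb s b2 n" and P: "preorder_on {1..n} \<rho>"
    and h: "h \<in> EP s \<rho> b1 n"
    and c1: "\<And>i j. i \<in> {1..n} \<Longrightarrow> j \<in> {1..n} \<Longrightarrow> coord s b1 n (b2 j) i \<noteq> 0 \<Longrightarrow> (i, \<tau> j) \<in> \<rho>"
    and c2: "\<And>i j. i \<in> {1..n} \<Longrightarrow> j \<in> {1..n} \<Longrightarrow> coord s b2 n (b1 i) j \<noteq> 0 \<Longrightarrow> (\<tau> j, i) \<in> \<rho>"
    and rf: "\<And>i j. i \<in> {1..n} \<Longrightarrow> j \<in> {1..n} \<Longrightarrow> (\<tau> i, \<tau> j) \<in> \<rho> \<Longrightarrow> (i, j) \<in> \<rho>"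
  shows "h \<in> EP s \<rho> b2 n"
proof -
  interpret B1: nb s b1 n by (rule nb1)
  interpret B2: nb s b2 n by (rule nb2)
  have lh: "B1.lin h" using h by (rule B1.EP_lin)
  show ?thesis unfolding EP_def
  proof (intro CollectI conjI ballI impI lh)
    fix i j assume i: "i \<in> {1..n}" and j: "j \<in> {1..n}" and ij: "(i, j) \<notin> \<rho>"
    have "Mt s b2 n h i j = (\<Sum>a=1..n. coord s b1 n (h (b2 j)) a * coord s b2 n (b1 a) i)"
      unfolding Mt_def by (rule C_change[OF nb1 nb2])
    also have "\<dots> = (\<Sum>a=1..n. (\<Sum>c=1..n. coord s b1 n (b2 j) c * Mt s b1 n h a c) * coord s b2 n (b1 a) i)"
      by (simp add: B1.C_apply[OF lh])
    also have "\<dots> = (\<Sum>a=1..n. 0)"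
    proof (rule sum.cong)
      fix a assume a: "a \<in> {1..n}"
      show "(\<Sum>c=1..n. coord s b1 n (b2 j) c * Mt s b1 n h a c) * coord s b2 n (b1 a) i = 0"
      proof (cases "coord s b2 n (b1 a) i = 0")
        case True thus ?thesis by simp
      next
        case False
        hence tia: "(\<tau> i, a) \<in> \<rho>" using c2[OF a i] by blast
        have "(\<Sum>c=1..n. coord s b1 n (b2 j) c * Mt s b1 n h a c) = (\<Sum>c=1..n. 0)"
        proof (rule sum.cong)
          fix c assume c: "c \<in> {1..n}"
          show "coord s b1 n (b2 j) c * Mt s b1 n h a c = 0"
          proof (cases "coord s b1 n (b2 j) c = 0")
            case True thus ?thesis by simp
          next
            case False
            hence "(c, \<tau> j) \<in> \<rho>" using c1[OF c j] by blast
            hence "(a, c) \<notin> \<rho>" using tia ij rf[OF i j] po_trans[OF P] by blast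
            thus ?thesis using B1.EP_pat[OF h a c] by simp
          qed
        qed simp
        thus ?thesis by simp
      qed
    qed simp
    finally show "Mt s b2 n h i j = 0" by simp
  qed
qed

lemma transfer:
  assumes nb1: "nb s b1 n" and nb2: "nb s b2 n" and P: "preorder_on {1..n} \<rho>"
    and bij: "bij_betw \<tau> {1..n} {1..n}"
    and tiff: "\<And>i j. i \<in> {1..n} \<Longrightarrow> j \<in> {1..n} \<Longrightarrow> (\<tau> i, \<tau> j) \<in> \<rho> \<longleftrightarrow> (i, j) \<in> \<rho>"
    and c1: "\<And>i j. i \<in> {1..n} \<Longrightarrow> j \<in> {1..n} \<Longrightarrow> coord s b1 n (b2 j) i \<noteq> 0 \<Longrightarrow> (i, \<tau> j) \<in> \<rho>"
    and c2: "\<And>i j. i \<in> {1..n} \<Longrightarrow> j \<in> {1..n} \<Longrightarrow> coord s b2 n (b1 i) j \<noteq> 0 \<Longrightarrow> (\<tau> j, i) \<in> \<rho>"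
  shows "EP s \<rho> b1 n = EP s \<rho> b2 n"
proof (intro set_eqI iffI)
  fix h assume h: "h \<in> EP s \<rho> b1 n"
  show "h \<in> EP s \<rho> b2 n"
  proof (rule transfer1[OF nb1 nb2 P h c1 c2])
    fix i j assume i: "i \<in> {1..n}" and j: "j \<in> {1..n}" and r: "(\<tau> i, \<tau> j) \<in> \<rho>"
    show "(i, j) \<in> \<rho>" using tiff[OF i j] r by blast
  qed
next
  fix h assume h: "h \<in> EP s \<rho> b2 n"
  define \<tau>' where "\<tau>' = inv_into {1..n} \<tau>"
  have im: "\<tau> ` {1..n} = {1..n}" using bij by (simp add: bij_betw_def)
  have jim: "j \<in> \<tau> ` {1..n}" if "j \<in> {1..n}" for j using im that by simp
  have t1: "\<tau>' j \<in> {1..n}" if "j \<in> {1..n}" for j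
    unfolding \<tau>'_def by (rule inv_into_into[OF jim[OF that]])
  have t2: "\<tau> (\<tau>' j) = j" if "j \<in> {1..n}" for j
    unfolding \<tau>'_def by (rule f_inv_into_f[OF jim[OF that]])
  show "h \<in> EP s \<rho> b1 n"
  proof (rule transfer1[OF nb2 nb1 P h, of \<tau>'])
    fix i j assume i: "i \<in> {1..n}" and j: "j \<in> {1..n}" and ne: "coord s b2 n (b1 j) i \<noteq> 0"
    have "(\<tau> i, j) \<in> \<rho>" by (rule c2[OF j i ne])
    hence "(\<tau> i, \<tau> (\<tau>' j)) \<in> \<rho>" using t2[OF j] by simp
    thus "(i, \<tau>' j) \<in> \<rho>" using tiff[OF i t1[OF j]] by blast
  next
    fix i j assume i: "i \<in> {1..n}" and j: "j \<in> {1..n}" and ne: "coord s b1 n (b2 i) j \<noteq> 0"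
    have "(j, \<tau> i) \<in> \<rho>" by (rule c1[OF j i ne])
    hence "(\<tau> (\<tau>' j), \<tau> i) \<in> \<rho>" using t2[OF j] by simp
    thus "(\<tau>' j, i) \<in> \<rho>" using tiff[OF t1[OF j] i] by blast
  next
    fix i j assume i: "i \<in> {1..n}" and j: "j \<in> {1..n}" and r: "(\<tau>' i, \<tau>' j) \<in> \<rho>"
    hence "(\<tau> (\<tau>' i), \<tau> (\<tau>' j)) \<in> \<rho>" using tiff[OF t1[OF i] t1[OF j]] by blast
    thus "(i, j) \<in> \<rho>" using t2[OF i] t2[OF j] by simp
  qed
qed

lemma Tfam_nz: "a \<in> Tfam \<rho> \<Longrightarrow> (i, j) \<in> \<rho> \<Longrightarrow> a i j \<noteq> 0"
  unfolding Tfam_def by blast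
lemma Tfam_cocycle: "a \<in> Tfam \<rho> \<Longrightarrow> (i, j) \<in> \<rho> \<Longrightarrow> (j, r) \<in> \<rho> \<Longrightarrow> a i j * a j r = a i r"
  unfolding Tfam_def by blast
lemma Tfam_diag: assumes "a \<in> Tfam \<rho>" "(i, i) \<in> \<rho>" shows "a i i = 1"
proof -
  have "a i i * a i i = a i i" "a i i \<noteq> 0" using Tfam_nz Tfam_cocycle assms by blast+
  thus ?thesis by (metis mult_cancel_right1)
qed

section \<open>Construction of the isomorphism\<close>

lemma construct_iso:
  fixes s :: "'k::field \<Rightarrow> 'v::ab_group_add \<Rightarrow> 'v" and s' :: "'k \<Rightarrow> 'w::ab_group_add \<Rightarrow> 'w"
  assumes nbv: "nb s v n" and nbw: "nb s' w n" and P: "preorder_on {1..n} \<rho>" and a: "a \<in> Tfam \<rho>"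
  shows "\<exists>\<phi>. alg_iso s s' (EP s \<rho> v n) (EP s' \<rho> w n) \<phi>
     \<and> (\<forall>(i, j) \<in> \<rho>. \<phi> (Emat s v n i j) = (\<lambda>x. s' (a i j * coord s' w n x j) (w i)))"
proof -
  interpret V: nb s v n by (rule nbv)
  interpret W: nb s' w n by (rule nbw)
  define ab where "ab i j = (if (i, j) \<in> \<rho> then a i j else 0)" for i j
  define \<phi> where "\<phi> f = Op s' w n (\<lambda>i j. ab i j * Mt s v n f i j)" for f
  have ab_nz: "ab i j \<noteq> 0 \<longleftrightarrow> (i, j) \<in> \<rho>" for i j
    using Tfam_nz[OF a] by (simp add: ab_def)
  have lphi: "W.lin (\<phi> f)" for f unfolding \<phi>_def by (rule W.lin_Op)
  have Mphi: "Mt s' w n (\<phi> f) i j = ab i j * Mt s v n f i j" if "i \<in> {1..n}" "j \<in> {1..n}" for f i j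
    unfolding \<phi>_def using W.Mt_Op[OF that] .
  have E: "\<phi> (Emat s v n i j) = (\<lambda>x. s' (a i j * coord s' w n x j) (w i))" if ij: "(i, j) \<in> \<rho>" for i j
  proof (rule W.Mt_eqI[OF lphi W.lin_rank1])
    have i: "i \<in> {1..n}" and j: "j \<in> {1..n}" using po_sub[OF P ij] by auto
    fix r t assume r: "r \<in> {1..n}" and t: "t \<in> {1..n}"
    show "Mt s' w n (\<phi> (Emat s v n i j)) r t = Mt s' w n (\<lambda>x. s' (a i j * coord s' w n x j) (w i)) r t"
      unfolding Mphi[OF r t] V.Mt_Emat[OF i j r t]
      using ij by (auto simp: Mt_def W.C_scale W.C_basis[OF _ t] W.C_basis[OF r i] W.C_basis[OF j t] ab_def)
  qed
  have add: "\<phi> (\<lambda>x. f x + h x) = (\<lambda>x. \<phi> f x + \<phi> h x)" for f h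
  proof (rule W.Mt_eqI[OF lphi W.lin_add[OF lphi lphi]])
    fix i j assume i: "i \<in> {1..n}" and j: "j \<in> {1..n}"
    show "Mt s' w n (\<phi> (\<lambda>x. f x + h x)) i j = Mt s' w n (\<lambda>x. \<phi> f x + \<phi> h x) i j"
      unfolding W.Mt_add Mphi[OF i j] V.Mt_add by (simp add: algebra_simps)
  qed
  have scale: "\<phi> (\<lambda>x. s c (f x)) = (\<lambda>x. s' c (\<phi> f x))" for c f
  proof (rule W.Mt_eqI[OF lphi W.lin_scale[OF lphi]])
    fix i j assume i: "i \<in> {1..n}" and j: "j \<in> {1..n}"
    show "Mt s' w n (\<phi> (\<lambda>x. s c (f x))) i j = Mt s' w n (\<lambda>x. s' c (\<phi> f x)) i j"
      unfolding W.Mt_scale Mphi[OF i j] V.Mt_scale by (simp add: algebra_simps)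
  qed
  have mult: "\<phi> (f \<circ> h) = \<phi> f \<circ> \<phi> h" if f: "f \<in> EP s \<rho> v n" and h: "h \<in> EP s \<rho> v n" for f h
  proof (rule W.Mt_eqI[OF lphi W.lin_comp[OF lphi lphi]])
    fix i r assume i: "i \<in> {1..n}" and r: "r \<in> {1..n}"
    have "Mt s' w n (\<phi> f \<circ> \<phi> h) i r = (\<Sum>t=1..n. Mt s' w n (\<phi> f) i t * Mt s' w n (\<phi> h) t r)"
      by (rule W.Mt_comp[OF lphi])
    also have "\<dots> = (\<Sum>t=1..n. ab i r * (Mt s v n f i t * Mt s v n h t r))"
    proof (rule sum.cong)
      fix t assume t: "t \<in> {1..n}"
      show "Mt s' w n (\<phi> f) i t * Mt s' w n (\<phi> h) t r = ab i r * (Mt s v n f i t * Mt s v n h t r)"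
      proof (cases "Mt s v n f i t = 0 \<or> Mt s v n h t r = 0")
        case True thus ?thesis unfolding Mphi[OF i t] Mphi[OF t r] by auto
      next
        case False
        hence it: "(i, t) \<in> \<rho>" and tr: "(t, r) \<in> \<rho>"
          using V.EP_pat[OF f i t] V.EP_pat[OF h t r] by auto
        have ir: "(i, r) \<in> \<rho>" using po_trans[OF P it tr] .
        have "ab i t * ab t r = ab i r" using it tr ir Tfam_cocycle[OF a it tr] by (simp add: ab_def)
        thus ?thesis unfolding Mphi[OF i t] Mphi[OF t r] by (simp add: algebra_simps)
      qed
    qed simp
    also have "\<dots> = ab i r * Mt s v n (f \<circ> h) i r"
      by (simp add: V.Mt_comp[OF V.EP_lin[OF f]] sum_distrib_left)
    also have "\<dots> = Mt s' w n (\<phi> (f \<circ> h)) i r" by (rule Mphi[OF i r, symmetric])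
    finally show "Mt s' w n (\<phi> (f \<circ> h)) i r = Mt s' w n (\<phi> f \<circ> \<phi> h) i r" by simp
  qed
  have idp: "\<phi> id = id"
  proof (rule W.Mt_eqI[OF lphi W.lin_id])
    fix i j assume i: "i \<in> {1..n}" and j: "j \<in> {1..n}"
    have "ab i i = 1" using Tfam_diag[OF a po_refl[OF P i]] po_refl[OF P i] by (simp add: ab_def)
    thus "Mt s' w n (\<phi> id) i j = Mt s' w n id i j"
      unfolding Mphi[OF i j] V.Mt_id[OF i j] W.Mt_id[OF i j] by auto
  qed
  have into: "\<phi> f \<in> EP s' \<rho> w n" for f
    unfolding EP_def using lphi Mphi ab_nz by fastforce
  have inj: "inj_on \<phi> (EP s \<rho> v n)"
  proof (rule inj_onI)
    fix f h assume f: "f \<in> EP s \<rho> v n" and h: "h \<in> EP s \<rho> v n" and eq: "\<phi> f = \<phi> h"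
    show "f = h"
    proof (rule V.Mt_eqI[OF V.EP_lin[OF f] V.EP_lin[OF h]])
      fix i j assume i: "i \<in> {1..n}" and j: "j \<in> {1..n}"
      show "Mt s v n f i j = Mt s v n h i j"
      proof (cases "(i, j) \<in> \<rho>")
        case True
        have "ab i j * Mt s v n f i j = ab i j * Mt s v n h i j" using Mphi[OF i j] eq by metis
        thus ?thesis using True ab_nz[of i j] by auto
      next
        case False thus ?thesis using V.EP_pat[OF f i j] V.EP_pat[OF h i j] by simp
      qed
    qed
  qed
  have onto: "EP s' \<rho> w n \<subseteq> \<phi> ` EP s \<rho> v n"
  proof
    fix h assume h: "h \<in> EP s' \<rho> w n"
    define f where "f = Op s v n (\<lambda>i j. Mt s' w n h i j / ab i j)"
    have Mf: "Mt s v n f i j = Mt s' w n h i j / ab i j" if "i \<in> {1..n}" "j \<in> {1..n}" for i j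
      unfolding f_def using V.Mt_Op[OF that] .
    have fE: "f \<in> EP s \<rho> v n" unfolding EP_def
      using V.lin_Op Mf ab_nz by (fastforce simp: f_def)
    have "\<phi> f = h"
    proof (rule W.Mt_eqI[OF lphi W.EP_lin[OF h]])
      fix i j assume i: "i \<in> {1..n}" and j: "j \<in> {1..n}"
      show "Mt s' w n (\<phi> f) i j = Mt s' w n h i j"
      proof (cases "(i, j) \<in> \<rho>")
        case True thus ?thesis unfolding Mphi[OF i j] Mf[OF i j] using ab_nz[of i j] by auto
      next
        case False thus ?thesis unfolding Mphi[OF i j] using W.EP_pat[OF h i j] ab_nz[of i j] by auto
      qed
    qed
    thus "h \<in> \<phi> ` EP s \<rho> v n" using fE by blast
  qed
  have "bij_betw \<phi> (EP s \<rho> v n) (EP s' \<rho> w n)"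
    unfolding bij_betw_def using inj into onto by blast
  hence "alg_iso s s' (EP s \<rho> v n) (EP s' \<rho> w n) \<phi>"
    unfolding alg_iso_def using add scale mult idp by blast
  thus ?thesis using E by blast
qed




lemma rank_bij:
  fixes Y :: "nat set" assumes fin: "finite Y"
  shows "bij_betw (\<lambda>y. card {t\<in>Y. t < y}) Y {..<card Y}"
proof -
  let ?r = "\<lambda>y. card {t\<in>Y. t < y}"
  have mono: "?r x < ?r y" if "x \<in> Y" "y \<in> Y" "x < y" for x y
  proof (rule psubset_card_mono)
    show "finite {t\<in>Y. t < y}" using fin by simp
    show "{t\<in>Y. t < x} < {t\<in>Y. t < y}" using that by auto
  qed
  have inj: "inj_on ?r Y"
  proof (rule inj_onI)
    fix x y assume x: "x \<in> Y" and y: "y \<in> Y" and eq: "?r x = ?r y"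
    show "x = y"
    proof (rule ccontr)
      assume "x \<noteq> y"
      hence "x < y \<or> y < x" by arith
      thus False using mono[OF x y] mono[OF y x] eq by auto
    qed
  qed
  have sub: "?r ` Y \<subseteq> {..<card Y}"
  proof
    fix z assume "z \<in> ?r ` Y"
    then obtain y where y: "y \<in> Y" "z = ?r y" by blast
    have "{t\<in>Y. t < y} < Y" using y by auto
    hence "?r y < card Y" using fin by (rule psubset_card_mono[rotated])
    thus "z \<in> {..<card Y}" using y by simp
  qed
  have "?r ` Y = {..<card Y}"
    by (rule card_subset_eq[OF _ sub]) (simp_all add: card_image[OF inj])
  thus ?thesis using inj by (simp add: bij_betw_def)
qed

context
  fixes \<rho> :: "(nat \<times> nat) set" and n :: nat and g :: "nat set \<Rightarrow> nat set"
  assumes P: "preorder_on {1..n} \<rho>" and g: "g \<in> Aut0 \<rho> n"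
begin

lemma g_classes: "\<alpha> \<in> classes \<rho> n \<Longrightarrow> g \<alpha> \<in> classes \<rho> n"
  using g unfolding Aut0_def bij_betw_def by blast

lemma g_card: "\<alpha> \<in> classes \<rho> n \<Longrightarrow> card (g \<alpha>) = card \<alpha>"
  using g unfolding Aut0_def by blast

lemma g_le: "\<alpha> \<in> classes \<rho> n \<Longrightarrow> \<beta> \<in> classes \<rho> n \<Longrightarrow> cls_le \<rho> (g \<alpha>) (g \<beta>) \<longleftrightarrow> cls_le \<rho> \<alpha> \<beta>"
  using g unfolding Aut0_def by blast

lemma g_inj: "\<alpha> \<in> classes \<rho> n \<Longrightarrow> \<beta> \<in> classes \<rho> n \<Longrightarrow> g \<alpha> = g \<beta> \<Longrightarrow> \<alpha> = \<beta>"
  using g unfolding Aut0_def bij_betw_def inj_on_def by blast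

lemma classes_sub: "\<alpha> \<in> classes \<rho> n \<Longrightarrow> \<alpha> \<subseteq> {1..n}"
  using classes_E[OF P] cls_sub[OF P] by blast

lemma tilde_prop: assumes j: "j \<in> {1..n}"
  shows "tilde \<rho> g j \<in> g (cls \<rho> j) \<and> card {t \<in> g (cls \<rho> j). t < tilde \<rho> g j} = card {t \<in> cls \<rho> j. t < j}"
proof -
  let ?X = "cls \<rho> j" let ?Y = "g (cls \<rho> j)"
  have X: "?X \<in> classes \<rho> n" by (rule cls_in_classes[OF P j])
  have finY: "finite ?Y" using classes_sub[OF g_classes[OF X]] finite_subset by blast
  have finX: "finite ?X" using classes_sub[OF X] finite_subset by blast
  have "{t \<in> ?X. t < j} < ?X" using cls_self[OF P j] by auto
  hence "card {t \<in> ?X. t < j} < card ?X" by (rule psubset_card_mono[OF finX])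
  hence r: "card {t \<in> ?X. t < j} \<in> {..<card ?Y}" using g_card[OF X] by simp
  have bij: "bij_betw (\<lambda>y. card {t\<in>?Y. t < y}) ?Y {..<card ?Y}" by (rule rank_bij[OF finY])
  have ex: "\<exists>!y. y \<in> ?Y \<and> card {t\<in>?Y. t < y} = card {t \<in> ?X. t < j}"
  proof -
    have im: "(\<lambda>y. card {t\<in>?Y. t < y}) ` ?Y = {..<card ?Y}" using bij by (simp add: bij_betw_def)
    have inj: "inj_on (\<lambda>y. card {t\<in>?Y. t < y}) ?Y" using bij by (simp add: bij_betw_def)
    have "card {t \<in> ?X. t < j} \<in> (\<lambda>y. card {t\<in>?Y. t < y}) ` ?Y" using r im by simp
    then obtain y where y: "y \<in> ?Y" and y2: "card {t \<in> ?X. t < j} = card {t\<in>?Y. t < y}" by (rule imageE)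
    moreover have "y' = y" if "y' \<in> ?Y" "card {t\<in>?Y. t < y'} = card {t \<in> ?X. t < j}" for y'
      by (rule inj_onD[OF inj _ that(1) y]) (use that(2) y2 in simp)
    moreover have "card {t\<in>?Y. t < y} = card {t \<in> ?X. t < j}" using y2 by simp
    ultimately show ?thesis by blast
  qed
  show ?thesis unfolding tilde_def by (rule theI'[OF ex])
qed

lemma tilde_cls: assumes j: "j \<in> {1..n}" shows "cls \<rho> (tilde \<rho> g j) = g (cls \<rho> j)"
proof -
  obtain k where k: "k \<in> {1..n}" "g (cls \<rho> j) = cls \<rho> k"
    using classes_E[OF P g_classes[OF cls_in_classes[OF P j]]] by blast
  show ?thesis using cls_mem[OF P] tilde_prop[OF j] k by metis
qed

lemma tilde_range: assumes j: "j \<in> {1..n}" shows "tilde \<rho> g j \<in> {1..n}"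
  using tilde_prop[OF j] classes_sub[OF g_classes[OF cls_in_classes[OF P j]]] by blast

lemma tilde_bij: "bij_betw (tilde \<rho> g) {1..n} {1..n}"
proof -
  have inj: "inj_on (tilde \<rho> g) {1..n}"
  proof (rule inj_onI)
    fix i j assume i: "i \<in> {1..n}" and j: "j \<in> {1..n}" and eq: "tilde \<rho> g i = tilde \<rho> g j"
    have "g (cls \<rho> i) = g (cls \<rho> j)" using tilde_cls[OF i] tilde_cls[OF j] eq by simp
    hence c: "cls \<rho> i = cls \<rho> j" by (rule g_inj[OF cls_in_classes[OF P i] cls_in_classes[OF P j]])
    let ?X = "cls \<rho> i"
    have finX: "finite ?X" using cls_sub[OF P] finite_subset by blast
    have "card {t \<in> ?X. t < i} = card {t \<in> ?X. t < j}"
      using tilde_prop[OF i] tilde_prop[OF j] eq c by metis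
    moreover have "i \<in> ?X" "j \<in> ?X" using cls_self[OF P i] cls_self[OF P j] c by auto
    ultimately show "i = j" using rank_bij[OF finX] unfolding bij_betw_def inj_on_def by blast
  qed
  have "tilde \<rho> g ` {1..n} = {1..n}"
    by (rule endo_inj_surj[OF _ _ inj]) (use tilde_range in auto)
  thus ?thesis using inj by (simp add: bij_betw_def)
qed

lemma tilde_iff: assumes i: "i \<in> {1..n}" and j: "j \<in> {1..n}"
  shows "(tilde \<rho> g i, tilde \<rho> g j) \<in> \<rho> \<longleftrightarrow> (i, j) \<in> \<rho>"
proof -
  have "(tilde \<rho> g i, tilde \<rho> g j) \<in> \<rho> \<longleftrightarrow> cls_le \<rho> (cls \<rho> (tilde \<rho> g i)) (cls \<rho> (tilde \<rho> g j))"
    using cls_le_iff[OF P tilde_range[OF i] tilde_range[OF j]] by simp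
  also have "\<dots> \<longleftrightarrow> cls_le \<rho> (g (cls \<rho> i)) (g (cls \<rho> j))" using tilde_cls[OF i] tilde_cls[OF j] by simp
  also have "\<dots> \<longleftrightarrow> cls_le \<rho> (cls \<rho> i) (cls \<rho> j)"
    by (rule g_le[OF cls_in_classes[OF P i] cls_in_classes[OF P j]])
  also have "\<dots> \<longleftrightarrow> (i, j) \<in> \<rho>" by (rule cls_le_iff[OF P i j])
  finally show ?thesis .
qed

end

lemma span_card_le:
  assumes nb1: "nb s b1 n" and nb2: "nb s b2 n" and A: "A \<subseteq> {1..n}" and B: "B \<subseteq> {1..n}"
    and h: "\<And>j i. j \<in> A \<Longrightarrow> i \<in> {1..n} \<Longrightarrow> i \<notin> B \<Longrightarrow> coord s b1 n (b2 j) i = 0"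
  shows "card A \<le> card B"
proof -
  interpret B1: nb s b1 n by (rule nb1)
  interpret B2: nb s b2 n by (rule nb2)
  have sub: "b2 ` A \<subseteq> B1.span (b1 ` B)"
  proof
    fix x assume "x \<in> b2 ` A"
    then obtain j where j: "j \<in> A" "x = b2 j" by blast
    have "\<forall>i\<in>{1..n}. i \<notin> B \<longrightarrow> coord s b1 n (b2 j) i = 0" using h[OF j(1)] by blast
    thus "x \<in> B1.span (b1 ` B)" unfolding j(2) using B1.in_span_iff[OF B] by blast
  qed
  have ind: "B1.independent (b2 ` A)" by (rule B1.independent_mono[OF B2.b_indep image_mono[OF A]])
  have fB: "finite (b1 ` B)" using finite_subset[OF B] by blast
  have "card (b2 ` A) \<le> card (b1 ` B)"
    using B1.independent_span_bound[OF fB ind sub] by blast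
  moreover have "card (b2 ` A) = card A" by (rule card_image[OF inj_on_subset[OF B2.b_inj A]])
  moreover have "card (b1 ` B) = card B" by (rule card_image[OF inj_on_subset[OF B1.b_inj B]])
  ultimately show ?thesis by simp
qed

section \<open>The combinatorial lemma\<close>

lemma comb:
  fixes s :: "'k::field \<Rightarrow> 'w::ab_group_add \<Rightarrow> 'w"
  assumes nbv: "nb s v n" and nbu: "nb s u n" and P: "preorder_on {1..n} \<rho>"
    and U1: "\<And>i j. (i, j) \<in> \<rho> \<Longrightarrow> Emat s u n i j \<in> EP s \<rho> v n"
    and U2: "\<And>h i j. h \<in> EP s \<rho> v n \<Longrightarrow> i \<in> {1..n} \<Longrightarrow> j \<in> {1..n} \<Longrightarrow> (i, j) \<notin> \<rho> \<Longrightarrow> Mt s u n h i j = 0"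
  shows "\<exists>g\<in>Aut0 \<rho> n. (\<forall>i\<in>{1..n}. \<forall>j\<in>{1..n}. coord s v n (u j) i \<noteq> 0 \<longrightarrow> (i, tilde \<rho> g j) \<in> \<rho>)
          \<and> (\<forall>i\<in>{1..n}. \<forall>j\<in>{1..n}. coord s u n (v i) j \<noteq> 0 \<longrightarrow> (tilde \<rho> g j, i) \<in> \<rho>)"
proof -
  interpret V: nb s v n by (rule nbv)
  interpret U: nb s u n by (rule nbu)
  define Q where "Q i j = coord s v n (u j) i" for i j
  define R where "R j i = coord s u n (v i) j" for j i
  have FA: "(j, k) \<in> \<rho>" if "a \<in> {1..n}" "b \<in> {1..n}" "j \<in> {1..n}" "k \<in> {1..n}"
    "(a, b) \<in> \<rho>" "R j a \<noteq> 0" "Q b k \<noteq> 0" for a b j k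
  proof (rule ccontr)
    assume jk: "(j, k) \<notin> \<rho>"
    have "Mt s u n (Emat s v n a b) j k = 0" by (rule U2[OF V.EP_Emat[OF that(5) P] that(3,4) jk])
    moreover have "Mt s u n (Emat s v n a b) j k = Q b k * R j a"
      by (simp add: Mt_def V.Emat_eq U.C_scale Q_def R_def)
    ultimately show False using that(6,7) by simp
  qed
  have FB: "(a, b) \<in> \<rho>" if "a \<in> {1..n}" "b \<in> {1..n}" "j \<in> {1..n}" "k \<in> {1..n}"
    "(j, k) \<in> \<rho>" "Q a j \<noteq> 0" "R k b \<noteq> 0" for a b j k
  proof (rule ccontr)
    assume ab: "(a, b) \<notin> \<rho>"
    have "Mt s v n (Emat s u n j k) a b = 0" by (rule V.EP_pat[OF U1[OF that(5)] that(1,2) ab])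
    moreover have "Mt s v n (Emat s u n j k) a b = R k b * Q a j"
      by (simp add: Mt_def U.Emat_eq V.C_scale Q_def R_def)
    ultimately show False using that(6,7) by simp
  qed
  have partner1: "\<exists>i\<in>{1..n}. Q i j \<noteq> 0 \<and> R j i \<noteq> 0" if j: "j \<in> {1..n}" for j
  proof (rule ccontr)
    assume "\<not> ?thesis"
    hence z: "\<forall>i\<in>{1..n}. Q i j * R j i = 0" by auto
    have "1 = coord s u n (u j) j" using U.C_basis[OF j j] by simp
    also have "\<dots> = (\<Sum>i=1..n. Q i j * R j i)" unfolding Q_def R_def by (rule C_change[OF nbv nbu])
    also have "\<dots> = 0" by (rule sum.neutral[OF z])
    finally show False by simp
  qed
  have partner2: "\<exists>j\<in>{1..n}. Q i j \<noteq> 0 \<and> R j i \<noteq> 0" if i: "i \<in> {1..n}" for i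
  proof (rule ccontr)
    assume "\<not> ?thesis"
    hence z: "\<forall>j\<in>{1..n}. R j i * Q i j = 0" by auto
    have "1 = coord s v n (v i) i" using V.C_basis[OF i i] by simp
    also have "\<dots> = (\<Sum>j=1..n. R j i * Q i j)" unfolding Q_def R_def by (rule C_change[OF nbu nbv])
    also have "\<dots> = 0" by (rule sum.neutral[OF z])
    finally show False by simp
  qed
  define p where "p j = (SOME i. i \<in> {1..n} \<and> Q i j \<noteq> 0 \<and> R j i \<noteq> 0)" for j
  have pp: "p j \<in> {1..n} \<and> Q (p j) j \<noteq> 0 \<and> R j (p j) \<noteq> 0" if j: "j \<in> {1..n}" for j
    unfolding p_def using someI_ex[OF partner1[OF j, unfolded Bex_def]] by blast
  have F1: "(j, k) \<in> \<rho> \<longleftrightarrow> (p j, p k) \<in> \<rho>" if j: "j \<in> {1..n}" and k: "k \<in> {1..n}" for j k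
  proof
    assume "(j, k) \<in> \<rho>"
    thus "(p j, p k) \<in> \<rho>" using FB[OF _ _ j k] pp[OF j] pp[OF k] by blast
  next
    assume "(p j, p k) \<in> \<rho>"
    thus "(j, k) \<in> \<rho>" using FA[OF _ _ j k] pp[OF j] pp[OF k] by blast
  qed
  have F3: "(i, p j) \<in> \<rho>" if i: "i \<in> {1..n}" and j: "j \<in> {1..n}" and "Q i j \<noteq> 0" for i j
    using FB[OF i _ j j po_refl[OF P j] that(3)] pp[OF j] by blast
  have F4: "(p j, i) \<in> \<rho>" if i: "i \<in> {1..n}" and j: "j \<in> {1..n}" and "R j i \<noteq> 0" for i j
    using FB[OF _ i j j po_refl[OF P j] _ that(3)] pp[OF j] by blast
  have F2: "\<exists>j\<in>{1..n}. (p j, i) \<in> \<rho> \<and> (i, p j) \<in> \<rho>" if i: "i \<in> {1..n}" for i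
    using partner2[OF i] F3[OF i] F4[OF i] by blast
  define g where "g \<alpha> = cls \<rho> (p (SOME j. j \<in> {1..n} \<and> \<alpha> = cls \<rho> j))" for \<alpha>
  have gcls: "g (cls \<rho> j) = cls \<rho> (p j)" if j: "j \<in> {1..n}" for j
  proof -
    define j' where "j' = (SOME j'. j' \<in> {1..n} \<and> cls \<rho> j = cls \<rho> j')"
    have j': "j' \<in> {1..n}" "cls \<rho> j = cls \<rho> j'"
      unfolding j'_def using someI[of "\<lambda>j'. j' \<in> {1..n} \<and> cls \<rho> j = cls \<rho> j'" j] j by auto
    have "(j, j') \<in> \<rho>" "(j', j) \<in> \<rho>" using cls_eq_iff[OF P j j'(1)] j'(2) by auto
    hence "(p j, p j') \<in> \<rho>" "(p j', p j) \<in> \<rho>" using F1[OF j j'(1)] F1[OF j'(1) j] by auto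
    hence "cls \<rho> (p j') = cls \<rho> (p j)" using cls_eq_iff[OF P] pp[OF j] pp[OF j'(1)] by blast
    thus ?thesis unfolding g_def j'_def[symmetric] by simp
  qed
  have cardeq: "card (g (cls \<rho> j0)) = card (cls \<rho> j0)" if j0: "j0 \<in> {1..n}" for j0
  proof -
    define q where "q = p j0"
    have q: "q \<in> {1..n}" using pp[OF j0] by (simp add: q_def)
    define Ule where "Ule = {j\<in>{1..n}. (p j, q) \<in> \<rho>}"
    define Vle where "Vle = {i\<in>{1..n}. (i, q) \<in> \<rho>}"
    define Ult where "Ult = {j\<in>{1..n}. (p j, q) \<in> \<rho> \<and> (q, p j) \<notin> \<rho>}"
    define Vlt where "Vlt = {i\<in>{1..n}. (i, q) \<in> \<rho> \<and> (q, i) \<notin> \<rho>}"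
    have c1: "card Ule = card Vle"
    proof (rule antisym)
      show "card Ule \<le> card Vle"
      proof (rule span_card_le[OF nbv nbu])
        fix j i assume j: "j \<in> Ule" and i: "i \<in> {1..n}" "i \<notin> Vle"
        show "coord s v n (u j) i = 0"
        proof (rule ccontr)
          assume "coord s v n (u j) i \<noteq> 0"
          hence "(i, p j) \<in> \<rho>" using F3[OF i(1)] j unfolding Q_def Ule_def by blast
          hence "(i, q) \<in> \<rho>" using j po_trans[OF P] unfolding Ule_def by blast
          thus False using i unfolding Vle_def by blast
        qed
      qed (auto simp: Ule_def Vle_def)
      show "card Vle \<le> card Ule"
      proof (rule span_card_le[OF nbu nbv])
        fix i j assume i: "i \<in> Vle" and j: "j \<in> {1..n}" "j \<notin> Ule"
        show "coord s u n (v i) j = 0"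
        proof (rule ccontr)
          assume "coord s u n (v i) j \<noteq> 0"
          hence "(p j, i) \<in> \<rho>" using F4[OF _ j(1)] i unfolding R_def Vle_def by blast
          hence "(p j, q) \<in> \<rho>" using i po_trans[OF P] unfolding Vle_def by blast
          thus False using j unfolding Ule_def by blast
        qed
      qed (auto simp: Ule_def Vle_def)
    qed
    have c2: "card Ult = card Vlt"
    proof (rule antisym)
      show "card Ult \<le> card Vlt"
      proof (rule span_card_le[OF nbv nbu])
        fix j i assume j: "j \<in> Ult" and i: "i \<in> {1..n}" "i \<notin> Vlt"
        show "coord s v n (u j) i = 0"
        proof (rule ccontr)
          assume "coord s v n (u j) i \<noteq> 0"
          hence ipj: "(i, p j) \<in> \<rho>" using F3[OF i(1)] j unfolding Q_def Ult_def by blast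
          hence "(i, q) \<in> \<rho>" using j po_trans[OF P] unfolding Ult_def by blast
          moreover have "(q, i) \<notin> \<rho>" using j ipj po_trans[OF P] unfolding Ult_def by blast
          ultimately show False using i unfolding Vlt_def by blast
        qed
      qed (auto simp: Ult_def Vlt_def)
      show "card Vlt \<le> card Ult"
      proof (rule span_card_le[OF nbu nbv])
        fix i j assume i: "i \<in> Vlt" and j: "j \<in> {1..n}" "j \<notin> Ult"
        show "coord s u n (v i) j = 0"
        proof (rule ccontr)
          assume "coord s u n (v i) j \<noteq> 0"
          hence pji: "(p j, i) \<in> \<rho>" using F4[OF _ j(1)] i unfolding R_def Vlt_def by blast
          hence "(p j, q) \<in> \<rho>" using i po_trans[OF P] unfolding Vlt_def by blast
          moreover have "(q, p j) \<notin> \<rho>" using i pji po_trans[OF P] unfolding Vlt_def by blast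
          ultimately show False using j unfolding Ult_def by blast
        qed
      qed (auto simp: Ult_def Vlt_def)
    qed
    have e1: "Ule - Ult = cls \<rho> j0"
    proof (intro set_eqI iffI)
      fix j assume "j \<in> Ule - Ult"
      hence j: "j \<in> {1..n}" "(p j, q) \<in> \<rho>" "(q, p j) \<in> \<rho>" unfolding Ule_def Ult_def by auto
      hence "(j, j0) \<in> \<rho>" "(j0, j) \<in> \<rho>" using F1[OF j(1) j0] F1[OF j0 j(1)] q_def by auto
      thus "j \<in> cls \<rho> j0" unfolding cls_def by blast
    next
      fix j assume "j \<in> cls \<rho> j0"
      hence jj: "(j0, j) \<in> \<rho>" "(j, j0) \<in> \<rho>" unfolding cls_def by auto
      hence j: "j \<in> {1..n}" using po_sub[OF P] by blast
      have "(p j, q) \<in> \<rho>" "(q, p j) \<in> \<rho>" using F1[OF j j0] F1[OF j0 j] jj q_def by auto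
      thus "j \<in> Ule - Ult" using j unfolding Ule_def Ult_def by auto
    qed
    have e2: "Vle - Vlt = g (cls \<rho> j0)"
    proof -
      have "Vle - Vlt = cls \<rho> q"
        unfolding Vle_def Vlt_def cls_def using po_sub[OF P] by blast
      thus ?thesis using gcls[OF j0] q_def by simp
    qed
    have fin: "finite Ule" "finite Vle" unfolding Ule_def Vle_def by auto
    have "card (Ule - Ult) = card Ule - card Ult"
      by (rule card_Diff_subset) (use fin in \<open>auto simp: Ule_def Ult_def intro: finite_subset\<close>)
    moreover have "card (Vle - Vlt) = card Vle - card Vlt"
      by (rule card_Diff_subset) (use fin in \<open>auto simp: Vle_def Vlt_def intro: finite_subset\<close>)
    ultimately show ?thesis using e1 e2 c1 c2 by simp
  qed
  have gAut: "g \<in> Aut0 \<rho> n" unfolding Aut0_def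
  proof (intro CollectI conjI ballI)
    show "bij_betw g (classes \<rho> n) (classes \<rho> n)"
    proof (rule bij_betw_imageI)
      show "inj_on g (classes \<rho> n)"
      proof (rule inj_onI)
        fix \<alpha> \<beta> assume a: "\<alpha> \<in> classes \<rho> n" and b: "\<beta> \<in> classes \<rho> n" and eq: "g \<alpha> = g \<beta>"
        obtain j where j: "j \<in> {1..n}" "\<alpha> = cls \<rho> j" using classes_E[OF P a] by blast
        obtain k where k: "k \<in> {1..n}" "\<beta> = cls \<rho> k" using classes_E[OF P b] by blast
        have "cls \<rho> (p j) = cls \<rho> (p k)" using eq gcls[OF j(1)] gcls[OF k(1)] j k by simp
        hence "(p j, p k) \<in> \<rho> \<and> (p k, p j) \<in> \<rho>" using cls_eq_iff[OF P] pp[OF j(1)] pp[OF k(1)] by blast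
        hence "(j, k) \<in> \<rho> \<and> (k, j) \<in> \<rho>" using F1[OF j(1) k(1)] F1[OF k(1) j(1)] by blast
        thus "\<alpha> = \<beta>" using cls_eq_iff[OF P j(1) k(1)] j k by simp
      qed
      show "g ` classes \<rho> n = classes \<rho> n"
      proof (intro set_eqI iffI)
        fix \<gamma> assume "\<gamma> \<in> g ` classes \<rho> n"
        then obtain \<alpha> where a: "\<alpha> \<in> classes \<rho> n" "\<gamma> = g \<alpha>" by blast
        obtain j where j: "j \<in> {1..n}" "\<alpha> = cls \<rho> j" using classes_E[OF P a(1)] by blast
        show "\<gamma> \<in> classes \<rho> n" using a j gcls[OF j(1)] cls_in_classes[OF P] pp[OF j(1)] by simp
      next
        fix \<gamma> assume "\<gamma> \<in> classes \<rho> n"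
        then obtain i where i: "i \<in> {1..n}" "\<gamma> = cls \<rho> i" using classes_E[OF P] by blast
        obtain j where j: "j \<in> {1..n}" "(p j, i) \<in> \<rho>" "(i, p j) \<in> \<rho>" using F2[OF i(1)] by blast
        have "cls \<rho> i = cls \<rho> (p j)" using cls_eq_iff[OF P i(1)] pp[OF j(1)] j by blast
        hence "\<gamma> = g (cls \<rho> j)" using gcls[OF j(1)] i by simp
        thus "\<gamma> \<in> g ` classes \<rho> n" using cls_in_classes[OF P j(1)] by blast
      qed
    qed
  next
    fix \<alpha> \<beta> assume a: "\<alpha> \<in> classes \<rho> n" and b: "\<beta> \<in> classes \<rho> n"
    obtain j where j: "j \<in> {1..n}" "\<alpha> = cls \<rho> j" using classes_E[OF P a] by blast
    obtain k where k: "k \<in> {1..n}" "\<beta> = cls \<rho> k" using classes_E[OF P b] by blast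
    show "cls_le \<rho> \<alpha> \<beta> = cls_le \<rho> (g \<alpha>) (g \<beta>)"
      using cls_le_iff[OF P j(1) k(1)] cls_le_iff[OF P, of "p j" "p k"] pp[OF j(1)] pp[OF k(1)]
        F1[OF j(1) k(1)] gcls[OF j(1)] gcls[OF k(1)] j k by simp
  next
    fix \<alpha> assume a: "\<alpha> \<in> classes \<rho> n"
    obtain j where j: "j \<in> {1..n}" "\<alpha> = cls \<rho> j" using classes_E[OF P a] by blast
    show "card (g \<alpha>) = card \<alpha>" using cardeq[OF j(1)] j(2) by simp
  qed
  have tp: "(tilde \<rho> g j, p j) \<in> \<rho> \<and> (p j, tilde \<rho> g j) \<in> \<rho>" if j: "j \<in> {1..n}" for j
  proof -
    have "cls \<rho> (tilde \<rho> g j) = cls \<rho> (p j)" using tilde_cls[OF P gAut j] gcls[OF j] by simp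
    thus ?thesis using cls_eq_iff[OF P tilde_range[OF P gAut j]] pp[OF j] by blast
  qed
  show ?thesis
  proof (intro bexI[OF _ gAut] conjI ballI impI)
    fix i j assume i: "i \<in> {1..n}" and j: "j \<in> {1..n}" and ne: "coord s v n (u j) i \<noteq> 0"
    show "(i, tilde \<rho> g j) \<in> \<rho>" using F3[OF i j] ne tp[OF j] po_trans[OF P] unfolding Q_def by blast
  next
    fix i j assume i: "i \<in> {1..n}" and j: "j \<in> {1..n}" and ne: "coord s u n (v i) j \<noteq> 0"
    show "(tilde \<rho> g j, i) \<in> \<rho>" using F4[OF i j] ne tp[OF j] po_trans[OF P] unfolding R_def by blast
  qed
qed




lemma iso_form:
  fixes s :: "'k::field \<Rightarrow> 'v::ab_group_add \<Rightarrow> 'v" and s' :: "'k \<Rightarrow> 'w::ab_group_add \<Rightarrow> 'w"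
  assumes nbv: "nb s v n" and nbv': "nb s' v' n" and P: "preorder_on {1..n} \<rho>"
    and iso: "alg_iso s s' (EP s \<rho> v n) (EP s' \<rho> v' n) \<phi>"
  shows "\<exists>u c. nb s' u n
    \<and> (\<forall>i j. (i, j) \<in> \<rho> \<longrightarrow> c i j \<noteq> 0 \<and> \<phi> (Emat s v n i j) = (\<lambda>x. s' (c i j * coord s' u n x j) (u i)))
    \<and> (\<forall>i j r. (i, j) \<in> \<rho> \<longrightarrow> (j, r) \<in> \<rho> \<longrightarrow> c i j * c j r = c i r)
    \<and> (\<forall>i j. (i, j) \<in> \<rho> \<longrightarrow> Emat s' u n i j \<in> EP s' \<rho> v' n)
    \<and> (\<forall>h i j. h \<in> EP s' \<rho> v' n \<longrightarrow> i \<in> {1..n} \<longrightarrow> j \<in> {1..n} \<longrightarrow> (i, j) \<notin> \<rho> \<longrightarrow> Mt s' u n h i j = 0)"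
proof -
  interpret V: nb s v n by (rule nbv)
  interpret V': nb s' v' n by (rule nbv')
  let ?E = "EP s \<rho> v n" and ?E' = "EP s' \<rho> v' n"
  have bij: "bij_betw \<phi> ?E ?E'" using iso unfolding alg_iso_def by blast
  have add: "\<phi> (\<lambda>x. f x + h x) = (\<lambda>x. \<phi> f x + \<phi> h x)" if "f \<in> ?E" "h \<in> ?E" for f h
    using iso that unfolding alg_iso_def by blast
  have scl: "\<phi> (\<lambda>x. s c (f x)) = (\<lambda>x. s' c (\<phi> f x))" if "f \<in> ?E" for c f
    using iso that unfolding alg_iso_def by blast
  have mul: "\<phi> (f \<circ> h) = \<phi> f \<circ> \<phi> h" if "f \<in> ?E" "h \<in> ?E" for f h
    using iso that unfolding alg_iso_def by blast
  have phid: "\<phi> id = id" using iso unfolding alg_iso_def by blast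
  have into: "\<phi> f \<in> ?E'" if "f \<in> ?E" for f using bij that unfolding bij_betw_def by blast
  have onto: "\<exists>f\<in>?E. h = \<phi> f" if "h \<in> ?E'" for h using bij that unfolding bij_betw_def by blast
  have injp: "f = h" if "f \<in> ?E" "h \<in> ?E" "\<phi> f = \<phi> h" for f h
    using bij that unfolding bij_betw_def inj_on_def by blast
  have phi0: "\<phi> (\<lambda>x. 0) = (\<lambda>x. 0)"
  proof -
    have "\<phi> (\<lambda>x. (0::'v) + 0) = (\<lambda>x. \<phi> (\<lambda>x. 0) x + \<phi> (\<lambda>x. 0) x)" by (rule add[OF V.EP_zero V.EP_zero])
    hence "\<phi> (\<lambda>x. 0) x = \<phi> (\<lambda>x. 0) x + \<phi> (\<lambda>x. 0) x" for x by (metis add.right_neutral)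
    hence "\<phi> (\<lambda>x. 0) x = 0" for x by (metis add_cancel_right_right)
    thus ?thesis by (rule ext)
  qed
  let ?Em = "Emat s v n"
  have Eii: "?Em i i \<in> ?E" if "i \<in> {1..n}" for i by (rule V.EP_Emat[OF po_refl[OF P that] P])
  define f where "f i = \<phi> (?Em i i)" for i
  have fE': "f i \<in> ?E'" if "i \<in> {1..n}" for i unfolding f_def by (rule into[OF Eii[OF that]])
  have flin: "V'.lin (f i)" if "i \<in> {1..n}" for i by (rule V'.EP_lin[OF fE'[OF that]])
  have orth: "f i \<circ> f j = (if i = j then f i else (\<lambda>x. 0))" if i: "i \<in> {1..n}" and j: "j \<in> {1..n}" for i j
  proof -
    have "f i \<circ> f j = \<phi> (?Em i i \<circ> ?Em j j)" unfolding f_def by (rule mul[OF Eii[OF i] Eii[OF j], symmetric])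
    also have "\<dots> = (if i = j then f i else (\<lambda>x. 0))"
      unfolding V.Emat_comp[OF i i j j] f_def using phi0 by simp
    finally show ?thesis .
  qed
  have idem: "f i (f i x) = f i x" if "i \<in> {1..n}" for i x
    using orth[OF that that] by (metis comp_apply)
  have fifj: "f i (f j x) = 0" if "i \<in> {1..n}" "j \<in> {1..n}" "i \<noteq> j" for i j x
    using orth[OF that(1,2)] that(3) by (metis comp_apply)
  have psum: "I \<subseteq> {1..n} \<longrightarrow> (\<lambda>x. \<Sum>i\<in>I. ?Em i i x) \<in> ?E \<and> \<phi> (\<lambda>x. \<Sum>i\<in>I. ?Em i i x) = (\<lambda>x. \<Sum>i\<in>I. f i x)"
    if fin: "finite I" for I
    using fin
  proof (induction I rule: finite_induct)
    case empty show ?case using phi0 V.EP_zero by simp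
  next
    case (insert i F)
    show ?case
    proof
      assume sub: "insert i F \<subseteq> {1..n}"
      hence i: "i \<in> {1..n}" and F: "F \<subseteq> {1..n}" by auto
      have IH: "(\<lambda>x. \<Sum>i\<in>F. ?Em i i x) \<in> ?E" "\<phi> (\<lambda>x. \<Sum>i\<in>F. ?Em i i x) = (\<lambda>x. \<Sum>i\<in>F. f i x)"
        using insert.IH F by auto
      have eq: "(\<lambda>x. \<Sum>j\<in>insert i F. ?Em j j x) = (\<lambda>x. ?Em i i x + (\<Sum>j\<in>F. ?Em j j x))"
        using insert.hyps by simp
      have eq2: "(\<lambda>x. \<Sum>j\<in>insert i F. f j x) = (\<lambda>x. f i x + (\<Sum>j\<in>F. f j x))"
        using insert.hyps by simp
      show "(\<lambda>x. \<Sum>j\<in>insert i F. ?Em j j x) \<in> ?E \<and> \<phi> (\<lambda>x. \<Sum>j\<in>insert i F. ?Em j j x) = (\<lambda>x. \<Sum>j\<in>insert i F. f j x)"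
        unfolding eq eq2 using V.EP_add[OF Eii[OF i] IH(1)] add[OF Eii[OF i] IH(1)] IH(2) f_def by simp
    qed
  qed
  have idsum: "id = (\<lambda>x. \<Sum>i=1..n. ?Em i i x)"
  proof
    fix x show "id x = (\<Sum>i=1..n. ?Em i i x)" using V.expand[of x] by (simp add: V.Emat_eq)
  qed
  have sumf: "(\<Sum>i=1..n. f i x) = x" for x
  proof -
    have "\<phi> id = (\<lambda>x. \<Sum>i=1..n. f i x)" using psum[of "{1..n}"] idsum by simp
    thus ?thesis using phid by (metis id_apply)
  qed
  have corner: "\<exists>\<kappa>. f i \<circ> h \<circ> f i = (\<lambda>x. s' \<kappa> (f i x))" if i: "i \<in> {1..n}" and h: "h \<in> ?E'" for i h
  proof -
    obtain F where F: "F \<in> ?E" "h = \<phi> F" using onto[OF h] by blast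
    have lF: "V.lin F" using F(1) by (rule V.EP_lin)
    have c: "?Em i i \<circ> (F \<circ> ?Em i i) = (\<lambda>x. s (Mt s v n F i i) (?Em i i x))"
    proof
      fix x
      have "(?Em i i \<circ> (F \<circ> ?Em i i)) x = s (V.C (F (s (V.C x i) (v i))) i) (v i)" by (simp add: V.Emat_eq)
      also have "\<dots> = s (Mt s v n F i i) (?Em i i x)"
        by (simp add: V.lin_scaleD[OF lF] V.C_scale V.Emat_eq Mt_def mult.commute)
      finally show "(?Em i i \<circ> (F \<circ> ?Em i i)) x = s (Mt s v n F i i) (?Em i i x)" .
    qed
    have "f i \<circ> h \<circ> f i = \<phi> (?Em i i \<circ> (F \<circ> ?Em i i))"
      unfolding F(2) f_def mul[OF Eii[OF i] V.EP_comp[OF P F(1) Eii[OF i]]] mul[OF F(1) Eii[OF i]]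
      by (simp add: comp_assoc)
    also have "\<dots> = (\<lambda>x. s' (Mt s v n F i i) (f i x))" unfolding c f_def by (rule scl[OF Eii[OF i]])
    finally show ?thesis by blast
  qed
  have fnz: "f i \<noteq> (\<lambda>x. 0)" if i: "i \<in> {1..n}" for i
  proof
    assume "f i = (\<lambda>x. 0)"
    hence "?Em i i = (\<lambda>x. 0)" using injp[OF Eii[OF i] V.EP_zero] phi0 f_def by simp
    hence "?Em i i (v i) = 0" by simp
    thus False using V.b_nz[OF i] by (simp add: V.Emat_eq V.C_basis[OF i i])
  qed
  have rank1: "\<exists>y. y \<noteq> 0 \<and> f i y = y \<and> (\<forall>x. \<exists>l. f i x = s' l y)" if i: "i \<in> {1..n}" for i
  proof -
    let ?E't = "\<lambda>t. Emat s' v' n t t"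
    have "\<forall>t\<in>{1..n}. \<exists>\<kappa>. f i \<circ> ?E't t \<circ> f i = (\<lambda>x. s' \<kappa> (f i x))"
      using corner[OF i] V'.EP_Emat[OF po_refl[OF P] P] by blast
    then obtain \<kappa> where \<kappa>: "\<And>t. t \<in> {1..n} \<Longrightarrow> f i \<circ> ?E't t \<circ> f i = (\<lambda>x. s' (\<kappa> t) (f i x))"
      by metis
    have k1: "f i (s' (V'.C (f i x) t) (v' t)) = s' (\<kappa> t) (f i x)" if t: "t \<in> {1..n}" for t x
      using fun_cong[OF \<kappa>[OF t], of x] idem[OF i] by (simp add: V'.Emat_eq)
    have "\<exists>t\<in>{1..n}. \<kappa> t \<noteq> 0"
    proof (rule ccontr)
      assume "\<not> ?thesis"
      hence z: "\<kappa> t = 0" if "t \<in> {1..n}" for t using that by blast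
      have "f i x = 0" for x
      proof -
        have "f i x = f i (f i x)" using idem[OF i] by simp
        also have "\<dots> = f i (\<Sum>t=1..n. s' (V'.C (f i x) t) (v' t))" by (subst V'.expand[of "f i x"]) (rule refl)
        also have "\<dots> = (\<Sum>t=1..n. f i (s' (V'.C (f i x) t) (v' t)))" by (rule V'.lin_sum[OF flin[OF i]])
        also have "\<dots> = (\<Sum>t=1..n. 0)" by (rule sum.cong) (simp_all add: k1 z)
        finally show ?thesis by simp
      qed
      thus False using fnz[OF i] by blast
    qed
    then obtain t where t: "t \<in> {1..n}" "\<kappa> t \<noteq> 0" by blast
    define y where "y = f i (v' t)"
    have fx: "f i x = s' (inverse (\<kappa> t) * V'.C (f i x) t) y" for x
    proof -
      have "f i (s' (V'.C (f i x) t) (v' t)) = s' (V'.C (f i x) t) y"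
        unfolding y_def by (rule V'.lin_scaleD[OF flin[OF i]])
      hence "s' (\<kappa> t) (f i x) = s' (V'.C (f i x) t) y" using k1[OF t(1)] by simp
      hence "s' (inverse (\<kappa> t)) (s' (\<kappa> t) (f i x)) = s' (inverse (\<kappa> t)) (s' (V'.C (f i x) t) y)" by simp
      thus ?thesis using t(2) by simp
    qed
    have ynz: "y \<noteq> 0"
    proof
      assume "y = 0"
      hence "f i x = 0" for x using fx[of x] by simp
      thus False using fnz[OF i] by blast
    qed
    have "f i y = y" unfolding y_def by (rule idem[OF i])
    thus ?thesis using ynz fx by blast
  qed
  have "\<forall>i\<in>{1..n}. \<exists>y. y \<noteq> 0 \<and> f i y = y \<and> (\<forall>x. \<exists>l. f i x = s' l y)" using rank1 by blast
  then obtain u where u: "\<And>i. i \<in> {1..n} \<Longrightarrow> u i \<noteq> 0 \<and> f i (u i) = u i \<and> (\<forall>x. \<exists>l. f i x = s' l (u i))"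
    by metis
  have fu: "f i (u j) = (if i = j then u j else 0)" if i: "i \<in> {1..n}" and j: "j \<in> {1..n}" for i j
  proof (cases "i = j")
    case True thus ?thesis using u[OF j] by simp
  next
    case False
    have "f i (u j) = f i (f j (u j))" using u[OF j] by simp
    also have "\<dots> = 0" by (rule fifj[OF i j False])
    finally show ?thesis using False by simp
  qed
  have lc: "\<forall>j\<in>{1..n}. c j = 0" if z: "(\<Sum>j=1..n. s' (c j) (u j)) = 0" for c
  proof
    fix k assume k: "k \<in> {1..n}"
    have "f k (\<Sum>j=1..n. s' (c j) (u j)) = (\<Sum>j=1..n. s' (c j) (f k (u j)))"
      by (simp add: V'.lin_sum[OF flin[OF k]] V'.lin_scaleD[OF flin[OF k]])
    also have "\<dots> = (\<Sum>j=1..n. if j = k then s' (c k) (u k) else 0)"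
      by (rule sum.cong) (simp_all add: fu[OF k])
    also have "\<dots> = s' (c k) (u k)" using k by simp
    finally have "s' (c k) (u k) = 0" using z V'.lin_zero_val[OF flin[OF k]] by simp
    thus "c k = 0" using u[OF k] by simp
  qed
  have ii: "inj_on u {1..n} \<and> V'.independent (u ` {1..n})" by (rule V'.lincomb_indep) (rule lc)
  have sp: "V'.span (u ` {1..n}) = UNIV"
  proof -
    have "x \<in> V'.span (u ` {1..n})" for x
    proof -
      have "(\<Sum>i=1..n. f i x) \<in> V'.span (u ` {1..n})"
      proof (rule V'.span_sum)
        fix i assume i: "i \<in> {1..n}"
        obtain l where "f i x = s' l (u i)" using u[OF i] by blast
        thus "f i x \<in> V'.span (u ` {1..n})" using i by (simp add: V'.span_scale V'.span_base)
      qed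
      thus ?thesis using sumf by simp
    qed
    thus ?thesis by blast
  qed
  have nbu: "nb s' u n" by unfold_locales (use ii sp in auto)
  interpret U: nb s' u n by (rule nbu)
  have fC: "f i x = s' (U.C x i) (u i)" if i: "i \<in> {1..n}" for i x
  proof -
    have "f i x = f i (\<Sum>j=1..n. s' (U.C x j) (u j))" by (subst U.expand[of x]) (rule refl)
    also have "\<dots> = (\<Sum>j=1..n. s' (U.C x j) (f i (u j)))"
      by (simp add: V'.lin_sum[OF flin[OF i]] V'.lin_scaleD[OF flin[OF i]])
    also have "\<dots> = (\<Sum>j=1..n. if j = i then s' (U.C x i) (u i) else 0)"
      by (rule sum.cong) (simp_all add: fu[OF i])
    also have "\<dots> = s' (U.C x i) (u i)" using i by simp
    finally show ?thesis .
  qed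
  define c where "c i j = U.C (\<phi> (?Em i j) (u j)) i" for i j
  have Eij: "?Em i j \<in> ?E" if "(i, j) \<in> \<rho>" for i j by (rule V.EP_Emat[OF that P])
  have phiE: "\<phi> (?Em i j) = (\<lambda>x. s' (c i j * U.C x j) (u i))" if ij: "(i, j) \<in> \<rho>" for i j
  proof -
    have i: "i \<in> {1..n}" and j: "j \<in> {1..n}" using po_sub[OF P ij] by auto
    have lE: "V'.lin (\<phi> (?Em i j))" by (rule V'.EP_lin[OF into[OF Eij[OF ij]]])
    have "?Em i j = ?Em i i \<circ> (?Em i j \<circ> ?Em j j)"
      using V.Emat_comp[OF i j j j] V.Emat_comp[OF i i i j] by simp
    hence "\<phi> (?Em i j) = f i \<circ> (\<phi> (?Em i j) \<circ> f j)"
      unfolding f_def using mul[OF Eii[OF i] V.EP_comp[OF P Eij[OF ij] Eii[OF j]]] mul[OF Eij[OF ij] Eii[OF j]]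
      by simp
    hence "\<phi> (?Em i j) x = f i (\<phi> (?Em i j) (f j x))" for x by (metis comp_apply)
    also have "f i (\<phi> (?Em i j) (f j x)) = s' (c i j * U.C x j) (u i)" for x
      unfolding fC[OF j] V'.lin_scaleD[OF lE] V'.lin_scaleD[OF flin[OF i]] fC[OF i] c_def
      by (simp add: U.C_scale mult.commute)
    finally show ?thesis by (intro ext)
  qed
  have cnz: "c i j \<noteq> 0" if ij: "(i, j) \<in> \<rho>" for i j
  proof
    assume "c i j = 0"
    hence "\<phi> (?Em i j) = \<phi> (\<lambda>x. 0)" using phiE[OF ij] phi0 by simp
    hence "?Em i j = (\<lambda>x. 0)" using injp[OF Eij[OF ij] V.EP_zero] by simp
    moreover have i: "i \<in> {1..n}" and j: "j \<in> {1..n}" using po_sub[OF P ij] by auto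
    ultimately have "?Em i j (v j) = 0" by simp
    hence "v i = 0" by (simp add: V.Emat_eq V.C_basis[OF j j])
    thus False using V.b_nz[OF i] by simp
  qed
  have coc: "c i j * c j r = c i r" if ij: "(i, j) \<in> \<rho>" and jr: "(j, r) \<in> \<rho>" for i j r
  proof -
    have i: "i \<in> {1..n}" and j: "j \<in> {1..n}" and r: "r \<in> {1..n}" using po_sub[OF P ij] po_sub[OF P jr] by auto
    have ir: "(i, r) \<in> \<rho>" by (rule po_trans[OF P ij jr])
    have "?Em i j \<circ> ?Em j r = ?Em i r" using V.Emat_comp[OF i j j r] by simp
    hence "\<phi> (?Em i j) \<circ> \<phi> (?Em j r) = \<phi> (?Em i r)" using mul[OF Eij[OF ij] Eij[OF jr]] by simp
    hence "\<phi> (?Em i j) (\<phi> (?Em j r) (u r)) = \<phi> (?Em i r) (u r)" by (metis comp_apply)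
    hence "s' (c i j * (c j r * U.C (u j) j)) (u i) = s' (c i r) (u i)"
      unfolding phiE[OF ij] phiE[OF jr] phiE[OF ir] by (simp add: U.C_scale U.C_basis[OF r r])
    hence "s' (c i j * c j r) (u i) = s' (c i r) (u i)" using U.C_basis[OF j j] by simp
    thus ?thesis using U.b_nz[OF i] by simp
  qed
  have U1: "Emat s' u n i j \<in> ?E'" if ij: "(i, j) \<in> \<rho>" for i j
  proof -
    have "Emat s' u n i j = (\<lambda>x. s' (inverse (c i j)) (\<phi> (?Em i j) x))"
      unfolding phiE[OF ij] U.Emat_eq using cnz[OF ij] by (simp add: mult.assoc[symmetric])
    thus ?thesis using V'.EP_scale[OF into[OF Eij[OF ij]]] by simp
  qed
  have U2: "Mt s' u n h i j = 0" if h: "h \<in> ?E'" and i: "i \<in> {1..n}" and j: "j \<in> {1..n}" and ij: "(i, j) \<notin> \<rho>" for h i j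
  proof -
    obtain F where F: "F \<in> ?E" "h = \<phi> F" using onto[OF h] by blast
    have lF: "V.lin F" using F(1) by (rule V.EP_lin)
    have z: "?Em i i \<circ> (F \<circ> ?Em j j) = (\<lambda>x. 0)"
    proof
      fix x
      have "(?Em i i \<circ> (F \<circ> ?Em j j)) x = s (V.C x j * Mt s v n F i j) (v i)"
        by (simp add: V.Emat_eq V.lin_scaleD[OF lF] V.C_scale Mt_def)
      also have "\<dots> = 0" using V.EP_pat[OF F(1) i j ij] by simp
      finally show "(?Em i i \<circ> (F \<circ> ?Em j j)) x = 0" .
    qed
    have "f i \<circ> (h \<circ> f j) = \<phi> (?Em i i \<circ> (F \<circ> ?Em j j))"
      unfolding F(2) f_def mul[OF Eii[OF i] V.EP_comp[OF P F(1) Eii[OF j]]] mul[OF F(1) Eii[OF j]] by simp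
    also have "\<dots> = (\<lambda>x. 0)" unfolding z by (rule phi0)
    finally have "f i (h (f j (u j))) = 0" by (metis comp_apply)
    hence "s' (U.C (h (u j)) i) (u i) = 0" using u[OF j] fC[OF i] by simp
    thus ?thesis using U.b_nz[OF i] by (simp add: Mt_def)
  qed
  show ?thesis
    apply (rule exI[of _ u], rule exI[of _ c])
    using nbu cnz phiE coc U1 U2 by blast
qed




lemma nb_of_adapted: "vector_space s \<Longrightarrow> adapted_basis s \<rho> n Vf v \<Longrightarrow> nb s v n"
  unfolding adapted_basis_def nb_def nb_axioms_def by blast

theorem proposition4p2:
  fixes s :: "'k::field \<Rightarrow> 'v::ab_group_add \<Rightarrow> 'v"
    and s' :: "'k \<Rightarrow> 'w::ab_group_add \<Rightarrow> 'w"
    and \<rho> :: "(nat \<times> nat) set" and n :: nat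
    and Vf :: "nat set \<Rightarrow> 'v set" and Vf' :: "nat set \<Rightarrow> 'w set"
    and v :: "nat \<Rightarrow> 'v" and v' :: "nat \<Rightarrow> 'w"
  assumes "vector_space s" and "vector_space s'"
    and "n \<ge> 1" and "preorder_on {1..n} \<rho>"
    and "adapted_basis s \<rho> n Vf v" and "adapted_basis s' \<rho> n Vf' v'"
  shows "(\<forall>A \<in> units_rho \<rho> n. \<forall>g \<in> Aut0 \<rho> n. \<forall>a \<in> Tfam \<rho>.
            \<exists>\<phi>. alg_iso s s' (End_flag s \<rho> n Vf) (End_flag s' \<rho> n Vf') \<phi>
               \<and> (\<forall>(i, j) \<in> \<rho>. \<phi> (Emat s v n i j) = Fmat s' v' n \<rho> A g a i j))
       \<and> (\<forall>\<phi>. alg_iso s s' (End_flag s \<rho> n Vf) (End_flag s' \<rho> n Vf') \<phi> \<longrightarrow>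
            (\<exists>A \<in> units_rho \<rho> n. \<exists>g \<in> Aut0 \<rho> n. \<exists>a \<in> Tfam \<rho>.
               \<forall>(i, j) \<in> \<rho>. \<phi> (Emat s v n i j) = Fmat s' v' n \<rho> A g a i j))"
proof -
  note P = assms(4)
  have nbv: "nb s v n" by (rule nb_of_adapted[OF assms(1) assms(5)])
  have nbv': "nb s' v' n" by (rule nb_of_adapted[OF assms(2) assms(6)])
  interpret V: nb s v n by (rule nbv)
  interpret V': nb s' v' n by (rule nbv')
  have EF: "End_flag s \<rho> n Vf = EP s \<rho> v n" by (rule flag_EP[OF nbv P assms(5)])
  have EF': "End_flag s' \<rho> n Vf' = EP s' \<rho> v' n" by (rule flag_EP[OF nbv' P assms(6)])
  show ?thesis
  proof (intro conjI ballI allI impI)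
    fix A :: "nat \<Rightarrow> nat \<Rightarrow> 'k" and g and a :: "nat \<Rightarrow> nat \<Rightarrow> 'k" assume A: "A \<in> units_rho \<rho> n" and g: "g \<in> Aut0 \<rho> n" and a: "a \<in> Tfam \<rho>"
    obtain B where B: "B \<in> rho_mat \<rho>" "mat_mult n A B = mat_one n" "mat_mult n B A = mat_one n"
      using A unfolding units_rho_def by blast
    have Ar: "A \<in> rho_mat \<rho>" using A unfolding units_rho_def by blast
    define \<sigma> where "\<sigma> = tilde \<rho> g"
    have sbij: "bij_betw \<sigma> {1..n} {1..n}" unfolding \<sigma>_def by (rule tilde_bij[OF P g])
    have srange: "\<sigma> j \<in> {1..n}" if "j \<in> {1..n}" for j unfolding \<sigma>_def by (rule tilde_range[OF P g that])
    have sinj: "\<sigma> i = \<sigma> j \<longleftrightarrow> i = j" if "i \<in> {1..n}" "j \<in> {1..n}" for i j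
      using sbij that unfolding bij_betw_def inj_on_def by blast
    define w where "w = wvec s' v' n (mat_twist \<rho> g A)"
    have PQ: "(\<Sum>t=1..n. A i (\<sigma> t) * B (\<sigma> t) r) = (if i = r then 1 else 0)"
      if i: "i \<in> {1..n}" and r: "r \<in> {1..n}" for i r
    proof -
      have "(\<Sum>t=1..n. A i (\<sigma> t) * B (\<sigma> t) r) = (\<Sum>t=1..n. A i t * B t r)"
        by (rule sum.reindex_bij_betw[OF sbij])
      also have "\<dots> = mat_mult n A B i r" by (simp add: mat_mult_def)
      also have "\<dots> = mat_one n i r" using B(2) by simp
      also have "\<dots> = (if i = r then 1 else 0)" using i by (simp add: mat_one_def)
      finally show ?thesis .
    qed
    have QP: "(\<Sum>t=1..n. B (\<sigma> j) t * A t (\<sigma> r)) = (if j = r then 1 else 0)"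
      if j: "j \<in> {1..n}" and r: "r \<in> {1..n}" for j r
    proof -
      have "(\<Sum>t=1..n. B (\<sigma> j) t * A t (\<sigma> r)) = mat_mult n B A (\<sigma> j) (\<sigma> r)" by (simp add: mat_mult_def)
      also have "\<dots> = mat_one n (\<sigma> j) (\<sigma> r)" using B(3) by simp
      also have "\<dots> = (if j = r then 1 else 0)" using srange[OF j] sinj[OF j r] by (simp add: mat_one_def)
      finally show ?thesis .
    qed
    have wdef: "w = (\<lambda>j. \<Sum>i=1..n. s' (A i (\<sigma> j)) (v' i))"
      unfolding w_def wvec_def mat_twist_def \<sigma>_def by simp
    have nbw: "nb s' w n"
      and cw1: "\<And>i j. i \<in> {1..n} \<Longrightarrow> j \<in> {1..n} \<Longrightarrow> coord s' v' n (w j) i = A i (\<sigma> j)"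
      and cw2: "\<And>r j. r \<in> {1..n} \<Longrightarrow> j \<in> {1..n} \<Longrightarrow> coord s' w n (v' r) j = B (\<sigma> j) r"
      using newbasis[OF nbv' _ _ wdef, of "\<lambda>j r. B (\<sigma> j) r"] PQ QP by auto
    have EPeq: "EP s' \<rho> v' n = EP s' \<rho> w n"
    proof (rule transfer[OF nbv' nbw P sbij])
      fix i j assume i: "i \<in> {1..n}" and j: "j \<in> {1..n}"
      show "(\<sigma> i, \<sigma> j) \<in> \<rho> \<longleftrightarrow> (i, j) \<in> \<rho>" unfolding \<sigma>_def by (rule tilde_iff[OF P g i j])
    next
      fix i j assume i: "i \<in> {1..n}" and j: "j \<in> {1..n}" and ne: "coord s' v' n (w j) i \<noteq> 0"
      show "(i, \<sigma> j) \<in> \<rho>" using ne cw1[OF i j] Ar unfolding rho_mat_def by auto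
    next
      fix i j assume i: "i \<in> {1..n}" and j: "j \<in> {1..n}" and ne: "coord s' w n (v' i) j \<noteq> 0"
      show "(\<sigma> j, i) \<in> \<rho>" using ne cw2[OF i j] B(1) unfolding rho_mat_def by auto
    qed
    obtain \<phi> where \<phi>: "alg_iso s s' (EP s \<rho> v n) (EP s' \<rho> w n) \<phi>"
      "\<forall>(i, j) \<in> \<rho>. \<phi> (Emat s v n i j) = (\<lambda>x. s' (a i j * coord s' w n x j) (w i))"
      using construct_iso[OF nbv nbw P a] by blast
    have "\<forall>(i, j) \<in> \<rho>. \<phi> (Emat s v n i j) = Fmat s' v' n \<rho> A g a i j"
      using \<phi>(2) unfolding Fmat_def Let_def w_def by simp
    thus "\<exists>\<phi>. alg_iso s s' (End_flag s \<rho> n Vf) (End_flag s' \<rho> n Vf') \<phi>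
               \<and> (\<forall>(i, j) \<in> \<rho>. \<phi> (Emat s v n i j) = Fmat s' v' n \<rho> A g a i j)"
      using \<phi>(1) EF EF' EPeq by auto
  next
    fix \<phi> assume iso0: "alg_iso s s' (End_flag s \<rho> n Vf) (End_flag s' \<rho> n Vf') \<phi>"
    have iso: "alg_iso s s' (EP s \<rho> v n) (EP s' \<rho> v' n) \<phi>" using iso0 EF EF' by simp
    obtain u c where nbu: "nb s' u n"
      and H1: "\<forall>i j. (i, j) \<in> \<rho> \<longrightarrow> c i j \<noteq> 0 \<and> \<phi> (Emat s v n i j) = (\<lambda>x. s' (c i j * coord s' u n x j) (u i))"
      and H2: "\<forall>i j r. (i, j) \<in> \<rho> \<longrightarrow> (j, r) \<in> \<rho> \<longrightarrow> c i j * c j r = c i r"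
      and H3: "\<forall>i j. (i, j) \<in> \<rho> \<longrightarrow> Emat s' u n i j \<in> EP s' \<rho> v' n"
      and H4: "\<forall>h i j. h \<in> EP s' \<rho> v' n \<longrightarrow> i \<in> {1..n} \<longrightarrow> j \<in> {1..n} \<longrightarrow> (i, j) \<notin> \<rho> \<longrightarrow> Mt s' u n h i j = 0"
      using iso_form[OF nbv nbv' P iso] by blast
    have phiE: "c i j \<noteq> 0 \<and> \<phi> (Emat s v n i j) = (\<lambda>x. s' (c i j * coord s' u n x j) (u i))"
      if "(i, j) \<in> \<rho>" for i j using H1 that by blast
    have coc: "c i j * c j r = c i r" if "(i, j) \<in> \<rho>" "(j, r) \<in> \<rho>" for i j r using H2 that by blast
    have U1: "Emat s' u n i j \<in> EP s' \<rho> v' n" if "(i, j) \<in> \<rho>" for i j using H3 that by blast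
    have U2: "Mt s' u n h i j = 0" if "h \<in> EP s' \<rho> v' n" "i \<in> {1..n}" "j \<in> {1..n}" "(i, j) \<notin> \<rho>" for h i j
      using H4 that by blast
    interpret U: nb s' u n by (rule nbu)
    obtain g where g: "g \<in> Aut0 \<rho> n"
      and cq: "\<And>i j. i \<in> {1..n} \<Longrightarrow> j \<in> {1..n} \<Longrightarrow> coord s' v' n (u j) i \<noteq> 0 \<Longrightarrow> (i, tilde \<rho> g j) \<in> \<rho>"
      and cr: "\<And>i j. i \<in> {1..n} \<Longrightarrow> j \<in> {1..n} \<Longrightarrow> coord s' u n (v' i) j \<noteq> 0 \<Longrightarrow> (tilde \<rho> g j, i) \<in> \<rho>"
      using comb[OF nbv' nbu P U1 U2] by blast
    define \<sigma> where "\<sigma> = tilde \<rho> g"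
    have sbij: "bij_betw \<sigma> {1..n} {1..n}" unfolding \<sigma>_def by (rule tilde_bij[OF P g])
    define \<sigma>' where "\<sigma>' = inv_into {1..n} \<sigma>"
    have s'bij: "bij_betw \<sigma>' {1..n} {1..n}" unfolding \<sigma>'_def by (rule bij_betw_inv_into[OF sbij])
    have im: "\<sigma> ` {1..n} = {1..n}" using sbij by (simp add: bij_betw_def)
    have jim: "j \<in> \<sigma> ` {1..n}" if "j \<in> {1..n}" for j using im that by simp
    have t1: "\<sigma>' j \<in> {1..n}" if "j \<in> {1..n}" for j
      unfolding \<sigma>'_def by (rule inv_into_into[OF jim[OF that]])
    have t2: "\<sigma> (\<sigma>' j) = j" if "j \<in> {1..n}" for j
      unfolding \<sigma>'_def by (rule f_inv_into_f[OF jim[OF that]])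
    have t3: "\<sigma>' (\<sigma> j) = j" if "j \<in> {1..n}" for j
      unfolding \<sigma>'_def using sbij that by (simp add: bij_betw_def inv_into_f_f)
    have s'inj: "\<sigma>' i = \<sigma>' j \<longleftrightarrow> i = j" if "i \<in> {1..n}" "j \<in> {1..n}" for i j
      using t2 that by metis
    define A where "A i t = (if i \<in> {1..n} \<and> t \<in> {1..n} then coord s' v' n (u (\<sigma>' t)) i else 0)" for i t
    define B where "B t i = (if i \<in> {1..n} \<and> t \<in> {1..n} then coord s' u n (v' i) (\<sigma>' t) else 0)" for t i
    have Ar: "A \<in> rho_mat \<rho>" unfolding rho_mat_def
    proof (intro CollectI allI impI)
      fix i t assume it: "(i, t) \<notin> \<rho>"
      show "A i t = 0"
      proof (cases "i \<in> {1..n} \<and> t \<in> {1..n}")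
        case True
        have "coord s' v' n (u (\<sigma>' t)) i = 0"
          using cq[of i "\<sigma>' t"] True t1 t2 it unfolding \<sigma>_def by force
        thus ?thesis by (simp add: A_def)
      next
        case False thus ?thesis unfolding A_def by auto
      qed
    qed
    have Br: "B \<in> rho_mat \<rho>" unfolding rho_mat_def
    proof (intro CollectI allI impI)
      fix t i assume ti: "(t, i) \<notin> \<rho>"
      show "B t i = 0"
      proof (cases "i \<in> {1..n} \<and> t \<in> {1..n}")
        case True
        have "coord s' u n (v' i) (\<sigma>' t) = 0"
          using cr[of i "\<sigma>' t"] True t1 t2 ti unfolding \<sigma>_def by force
        thus ?thesis by (simp add: B_def)
      next
        case False thus ?thesis unfolding B_def by auto
      qed
    qed
    have AB: "mat_mult n A B = mat_one n"
    proof (intro ext)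
      fix i r
      show "mat_mult n A B i r = mat_one n i r"
      proof (cases "i \<in> {1..n} \<and> r \<in> {1..n}")
        case True
        hence i: "i \<in> {1..n}" and r: "r \<in> {1..n}" by auto
        have "mat_mult n A B i r = (\<Sum>t=1..n. coord s' v' n (u (\<sigma>' t)) i * coord s' u n (v' r) (\<sigma>' t))"
          unfolding mat_mult_def A_def B_def by (rule sum.cong) (use i r in auto)
        also have "\<dots> = (\<Sum>j=1..n. coord s' v' n (u j) i * coord s' u n (v' r) j)"
          by (rule sum.reindex_bij_betw[OF s'bij])
        also have "\<dots> = (\<Sum>j=1..n. coord s' u n (v' r) j * coord s' v' n (u j) i)" by (simp add: mult.commute)
        also have "\<dots> = coord s' v' n (v' r) i" by (rule C_change[OF nbu nbv', symmetric])
        also have "\<dots> = mat_one n i r" using V'.C_basis[OF i r] i by (simp add: mat_one_def)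
        finally show ?thesis .
      next
        case False
        hence "mat_mult n A B i r = 0" unfolding mat_mult_def A_def B_def by (auto intro: sum.neutral)
        thus ?thesis using False by (auto simp: mat_one_def)
      qed
    qed
    have BA: "mat_mult n B A = mat_one n"
    proof (intro ext)
      fix j r
      show "mat_mult n B A j r = mat_one n j r"
      proof (cases "j \<in> {1..n} \<and> r \<in> {1..n}")
        case True
        hence j: "j \<in> {1..n}" and r: "r \<in> {1..n}" by auto
        have "mat_mult n B A j r = (\<Sum>t=1..n. coord s' v' n (u (\<sigma>' r)) t * coord s' u n (v' t) (\<sigma>' j))"
          unfolding mat_mult_def A_def B_def by (rule sum.cong) (use j r in \<open>auto simp: mult.commute\<close>)
        also have "\<dots> = coord s' u n (u (\<sigma>' r)) (\<sigma>' j)" by (rule C_change[OF nbv' nbu, symmetric])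
        also have "\<dots> = mat_one n j r" using U.C_basis[OF t1[OF j] t1[OF r]] s'inj[OF j r] j
          by (simp add: mat_one_def)
        finally show ?thesis .
      next
        case False
        hence "mat_mult n B A j r = 0" unfolding mat_mult_def A_def B_def by (auto intro: sum.neutral)
        thus ?thesis using False by (auto simp: mat_one_def)
      qed
    qed
    have Au: "A \<in> units_rho \<rho> n" unfolding units_rho_def using Ar Br AB BA by blast
    define w where "w = wvec s' v' n (mat_twist \<rho> g A)"
    have wu: "w j = u j" if j: "j \<in> {1..n}" for j
    proof -
      have "w j = (\<Sum>i=1..n. s' (A i (\<sigma> j)) (v' i))" unfolding w_def wvec_def mat_twist_def \<sigma>_def by simp
      also have "\<dots> = (\<Sum>i=1..n. s' (coord s' v' n (u j) i) (v' i))"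
        by (rule sum.cong) (use j t3[OF j] tilde_range[OF P g j] in \<open>auto simp: A_def \<sigma>_def\<close>)
      also have "\<dots> = u j" by (rule V'.expand[symmetric])
      finally show ?thesis .
    qed
    have wimg: "w ` {1..n} = u ` {1..n}" using wu by auto
    have cwu: "coord s' w n x j = coord s' u n x j" if "j \<in> {1..n}" for x j
      unfolding coord_def wimg wu[OF that] ..
    define a where "a i j = (if (i, j) \<in> \<rho> then c i j else 1)" for i j
    have aT: "a \<in> Tfam \<rho>" unfolding Tfam_def
    proof (intro CollectI conjI ballI allI impI)
      fix p assume "p \<in> \<rho>"
      thus "(case p of (i, j) \<Rightarrow> a i j \<noteq> 0)" using phiE by (auto simp: a_def)
    next
      fix i j r assume "(i, j) \<in> \<rho>" "(j, r) \<in> \<rho>"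
      thus "a i j * a j r = a i r" using coc po_trans[OF P] by (simp add: a_def)
    qed
    have "\<forall>(i, j) \<in> \<rho>. \<phi> (Emat s v n i j) = Fmat s' v' n \<rho> A g a i j"
    proof (intro ballI, clarify)
      fix i j assume ij: "(i, j) \<in> \<rho>"
      have i: "i \<in> {1..n}" and j: "j \<in> {1..n}" using po_sub[OF P ij] by auto
      have "Fmat s' v' n \<rho> A g a i j = (\<lambda>x. s' (a i j * coord s' w n x j) (w i))"
        unfolding Fmat_def Let_def w_def ..
      also have "\<dots> = (\<lambda>x. s' (c i j * coord s' u n x j) (u i))"
        using cwu[OF j] wu[OF i] ij by (simp add: a_def)
      also have "\<dots> = \<phi> (Emat s v n i j)" using phiE[OF ij] by simp
      finally show "\<phi> (Emat s v n i j) = Fmat s' v' n \<rho> A g a i j" by simp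
    qed
    thus "\<exists>A \<in> units_rho \<rho> n. \<exists>g \<in> Aut0 \<rho> n. \<exists>a \<in> Tfam \<rho>.
               \<forall>(i, j) \<in> \<rho>. \<phi> (Emat s v n i j) = Fmat s' v' n \<rho> A g a i j"
      using Au g aT by blast
  qed
qed


end
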